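(* Assume (SH). For every $x\in\operatorname{dom}f$, \[ \partial f(x)=\bigcap_{\varepsilon>0}\overline{\operatorname{co}}\Big(\Big(\bigcup_{t\in T(x)}\partial_\varepsilon f_t(x)\Big)+\Big(\bigcup_{t\in T\setminus T(x)}\{0,\varepsilon\}\,\partial_\varepsilon(\rho_tf_t)(x)\Big)\Big), \] where $\rho_t=\rho_t(\varepsilon):=\dfrac{\varepsilon}{2f(x)-2f_t(x)+\varepsilon}$ for $t\in T\setminus T(x)$ (and the second union is $\{\theta\}$ when $T(x)=T$). If in addition $f$ attains its minimum at $x$, then also \[ \partial f(x)=\bigcap_{\varepsilon>0}\overline{\operatorname{co}}\Big(\Big(\bigcup_{t\in T(x)}\partial_\varepsilon f_t(x)\Big)\cup\Big(\bigcup_{t\in T\setminus T(x)}\varepsilon\,\partial_\varepsilon(\rho_tf_t)(x)\Big)\Big). \]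
   Context: $X$ is a real separated locally convex space with dual $X^*$ carrying the weak$^*$ topology; $\theta$ is the zero of $X^*$. $T$ is a nonempty index set, $\{f_t: t\in T\}$ are proper convex lsc functions $X\to\mathbb{R}\cup\{+\infty\}$, $f:=\sup_{t\in T}f_t$. $T(x):=\{t\in T: f_t(x)=f(x)\}$. $\partial_\varepsilon g(x)$ is the $\varepsilon$-subdifferential ($\{x^*:\ g(y)\ge g(x)+\langle x^*,y-x\rangle-\varepsilon\ \forall y\}$ if $g(x)\in\mathbb{R}$), $\partial=\partial_0$. $\Lambda A=\{\lambda a:\lambda\in\Lambda,a\in A\}$; $+$ is the Minkowski sum; $\overline{\operatorname{co}}$ is the weak$^*$-closed convex hull. (SH): $T$ is compact Hausdorff and $t\mapsto f_t(z)$ is upper semicontinuous on $T$ for each $z\in X$. *)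

theory Defs
  imports "HOL-Analysis.Analysis" "HOL-Library.Extended_Real"
begin

definition lcs_space :: "'x::{real_vector,t2_space} itself \<Rightarrow> bool" where
  "lcs_space _ \<longleftrightarrow>
     continuous_on UNIV (\<lambda>(u::'x, v::'x). u + v) \<and>
     continuous_on UNIV (\<lambda>(c::real, v::'x). c *\<^sub>R v) \<and>
     (\<forall>U::'x set. open U \<and> 0 \<in> U \<longrightarrow> (\<exists>V. open V \<and> convex V \<and> 0 \<in> V \<and> V \<subseteq> U))"

definition dual :: "('x::{real_vector,topological_space} \<Rightarrow> real) set" where
  "dual = {\<phi>. linear \<phi> \<and> continuous_on UNIV \<phi>}"

text \<open>Weak* topology on X*: the topology of pointwise convergence (product topology
  on functions) restricted to the dual.\<close>
definition wstar_closed :: "('x::{real_vector,topological_space} \<Rightarrow> real) set \<Rightarrow> bool" where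
  "wstar_closed C \<longleftrightarrow> C \<subseteq> dual \<and> closedin (top_of_set dual) C"

definition fconvex :: "('x \<Rightarrow> real) set \<Rightarrow> bool" where
  "fconvex C \<longleftrightarrow> (\<forall>a\<in>C. \<forall>b\<in>C. \<forall>u::real. 0 \<le> u \<and> u \<le> 1 \<longrightarrow>
       (\<lambda>y. (1 - u) * a y + u * b y) \<in> C)"

definition wstar_cco :: "('x::{real_vector,topological_space} \<Rightarrow> real) set \<Rightarrow> ('x \<Rightarrow> real) set" where
  "wstar_cco A = \<Inter>{C. A \<subseteq> C \<and> fconvex C \<and> wstar_closed C}"

definition msum :: "('x \<Rightarrow> real) set \<Rightarrow> ('x \<Rightarrow> real) set \<Rightarrow> ('x \<Rightarrow> real) set" where
  "msum A B = {(\<lambda>y. a y + b y) | a b. a \<in> A \<and> b \<in> B}"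

definition smul_set :: "real set \<Rightarrow> ('x \<Rightarrow> real) set \<Rightarrow> ('x \<Rightarrow> real) set" where
  "smul_set \<Lambda> A = {(\<lambda>y. l * a y) | l a. l \<in> \<Lambda> \<and> a \<in> A}"

definition proper_fun :: "('x \<Rightarrow> ereal) \<Rightarrow> bool" where
  "proper_fun g \<longleftrightarrow> (\<forall>y. g y \<noteq> -\<infinity>) \<and> (\<exists>y. g y < \<infinity>)"

definition convex_fun :: "('x::real_vector \<Rightarrow> ereal) \<Rightarrow> bool" where
  "convex_fun g \<longleftrightarrow> convex {(y, r::real). g y \<le> ereal r}"

definition lsc_fun :: "('x::topological_space \<Rightarrow> ereal) \<Rightarrow> bool" where
  "lsc_fun g \<longleftrightarrow> (\<forall>c::ereal. closed {y. g y \<le> c})"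

definition eps_subdiff :: "('x::{real_vector,topological_space} \<Rightarrow> ereal) \<Rightarrow> real \<Rightarrow> 'x \<Rightarrow> ('x \<Rightarrow> real) set" where
  "eps_subdiff g \<epsilon> x =
     (if \<bar>g x\<bar> \<noteq> \<infinity> then {\<phi> \<in> dual. \<forall>y. g y \<ge> g x + ereal (\<phi> y - \<phi> x - \<epsilon>)} else {})"

end

theory Submission
  imports Defs "HOL-Library.Function_Algebras"
begin


definition lg :: "('v::real_vector \<Rightarrow> real) \<Rightarrow> ('v \<times> real) set \<Rightarrow> bool" where
 "lg p H \<longleftrightarrow> (\<forall>u a b. (u,a)\<in>H \<longrightarrow> (u,b)\<in>H \<longrightarrow> a = b) \<and>
   (\<forall>u a w b. (u,a)\<in>H \<longrightarrow> (w,b)\<in>H \<longrightarrow> (u+w, a+b) \<in> H) \<and>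
   (\<forall>u a c. (u,a)\<in>H \<longrightarrow> (c *\<^sub>R u, c*a) \<in> H) \<and> (\<forall>u a. (u,a)\<in>H \<longrightarrow> a \<le> p u)"

lemma hb_extend:
  fixes p :: "'v::real_vector \<Rightarrow> real"
  assumes sub: "\<And>x y. p (x + y) \<le> p x + p y" and hom: "\<And>c x. c \<ge> 0 \<Longrightarrow> p (c *\<^sub>R x) = c * p x"
    and H: "lg p H" and ne: "H \<noteq> {}" and w: "w \<notin> fst ` H"
  shows "\<exists>H'. lg p H' \<and> H \<subseteq> H' \<and> H' \<noteq> H"
proof -
  have fn: "\<And>u a b. (u,a)\<in>H \<Longrightarrow> (u,b)\<in>H \<Longrightarrow> a = b"
   and add: "\<And>u a v b. (u,a)\<in>H \<Longrightarrow> (v,b)\<in>H \<Longrightarrow> (u+v, a+b) \<in> H"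
   and scl: "\<And>u a c. (u,a)\<in>H \<Longrightarrow> (c *\<^sub>R u, c*a) \<in> H"
   and bnd: "\<And>u a. (u,a)\<in>H \<Longrightarrow> a \<le> p u" using H unfolding lg_def by blast+
  have key: "a - p (u - w) \<le> p (v + w) - b" if "(u,a)\<in>H" "(v,b)\<in>H" for u a v b
  proof -
    have "a + b \<le> p (u + v)" using bnd[OF add[OF that]] .
    also have "\<dots> \<le> p (u - w) + p (v + w)" using sub[of "u - w" "v + w"] by (simp add: algebra_simps)
    finally show ?thesis by simp
  qed
  obtain v0 b0 where v0: "(v0,b0) \<in> H" using ne by auto
  define S where "S = {a - p (u - w) | u a. (u,a) \<in> H}"
  define \<beta> where "\<beta> = Sup S"
  have Sne: "S \<noteq> {}" using v0 S_def by auto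
  have Sbd: "bdd_above S" unfolding S_def bdd_above_def using key[OF _ v0] by blast
  have lo: "a - p (u - w) \<le> \<beta>" if "(u,a)\<in>H" for u a
    unfolding \<beta>_def by (rule cSup_upper) (use that S_def Sbd in auto)
  have hi: "\<beta> \<le> p (v + w) - b" if "(v,b)\<in>H" for v b
    unfolding \<beta>_def by (rule cSup_least) (use Sne S_def key that in auto)
  define H' where "H' = {(u + c *\<^sub>R w, a + c * \<beta>) | u a c. (u,a) \<in> H}"
  have zero: "(0, 0) \<in> H" using scl[OF v0, of 0] by simp
  have uniq: "u = u' \<and> c = c'" if "u + c *\<^sub>R w = u' + c' *\<^sub>R w" "(u,a)\<in>H" "(u',a')\<in>H" for u u' a a' c c'
  proof (cases "c = c'")
    case True then show ?thesis using that by simp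
  next
    case False
    have "(c - c') *\<^sub>R w = u' - u" using that(1) by (simp add: algebra_simps)
    moreover have "(1/(c-c')) *\<^sub>R ((c - c') *\<^sub>R w) = w" using False by simp
    ultimately have "w = (1/(c - c')) *\<^sub>R (u' - u)" by simp
    moreover have "(u' - u, a' - a) \<in> H" using add[OF that(3) scl[OF that(2), of "-1"]] by simp
    ultimately have "(w, (1/(c-c')) * (a' - a)) \<in> H" using scl by metis
    then show ?thesis using w by force
  qed
  have "lg p H'"
    unfolding lg_def
  proof (intro conjI allI impI)
    fix u a b assume "(u,a)\<in>H'" "(u,b)\<in>H'"
    then obtain u1 a1 c1 u2 a2 c2 where e: "u = u1 + c1 *\<^sub>R w" "a = a1 + c1 * \<beta>" "(u1,a1)\<in>H"
      "u = u2 + c2 *\<^sub>R w" "b = a2 + c2 * \<beta>" "(u2,a2)\<in>H" unfolding H'_def by blast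
    have "u1 = u2 \<and> c1 = c2" using uniq[of u1 c1 u2 c2 a1 a2] e by simp
    then show "a = b" using e fn[of u1 a1 a2] by simp
  next
    fix u a v b assume "(u,a)\<in>H'" "(v,b)\<in>H'"
    then obtain u1 a1 c1 u2 a2 c2 where e: "u = u1 + c1 *\<^sub>R w" "a = a1 + c1 * \<beta>" "(u1,a1)\<in>H"
      "v = u2 + c2 *\<^sub>R w" "b = a2 + c2 * \<beta>" "(u2,a2)\<in>H" unfolding H'_def by blast
    have "u + v = (u1 + u2) + (c1 + c2) *\<^sub>R w" "a + b = (a1 + a2) + (c1 + c2) * \<beta>"
      using e by (simp_all add: algebra_simps)
    then show "(u+v, a+b) \<in> H'" unfolding H'_def using add[OF e(3) e(6)] by blast
  next
    fix u a c assume "(u,a)\<in>H'"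
    then obtain u1 a1 c1 where e: "u = u1 + c1 *\<^sub>R w" "a = a1 + c1 * \<beta>" "(u1,a1)\<in>H"
      unfolding H'_def by blast
    have "c *\<^sub>R u = c *\<^sub>R u1 + (c * c1) *\<^sub>R w" "c * a = c * a1 + (c * c1) * \<beta>"
      using e by (simp_all add: algebra_simps)
    then show "(c *\<^sub>R u, c * a) \<in> H'" unfolding H'_def using scl[OF e(3)] by blast
  next
    fix u a assume "(u,a)\<in>H'"
    then obtain u1 a1 c where e: "u = u1 + c *\<^sub>R w" "a = a1 + c * \<beta>" "(u1,a1)\<in>H"
      unfolding H'_def by blast
    consider "c = 0" | "c > 0" | "c < 0" by linarith
    then show "a \<le> p u"
    proof cases
      case 1 then show ?thesis using e bnd by simp
    next
      case 2
      have m: "((1/c) *\<^sub>R u1, (1/c) * a1) \<in> H" using scl[OF e(3)] .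
      have "\<beta> \<le> p ((1/c) *\<^sub>R u1 + w) - (1/c) * a1" using hi[OF m] .
      then have "c * \<beta> \<le> c * (p ((1/c) *\<^sub>R u1 + w) - (1/c) * a1)" using 2 by simp
      then have "c * \<beta> \<le> c * p ((1/c) *\<^sub>R u1 + w) - a1" using 2 by (simp add: right_diff_distrib)
      also have "c * p ((1/c) *\<^sub>R u1 + w) = p (c *\<^sub>R ((1/c) *\<^sub>R u1 + w))" using hom[of c] 2 by simp
      also have "c *\<^sub>R ((1/c) *\<^sub>R u1 + w) = u" using 2 e by (simp add: algebra_simps)
      finally show ?thesis using e by simp
    next
      case 3
      define d where "d = - c"
      have d: "d > 0" using 3 d_def by simp
      have m: "((1/d) *\<^sub>R u1, (1/d) * a1) \<in> H" using scl[OF e(3)] .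
      have "(1/d) * a1 - p ((1/d) *\<^sub>R u1 - w) \<le> \<beta>" using lo[OF m] .
      then have "d * ((1/d) * a1 - p ((1/d) *\<^sub>R u1 - w)) \<le> d * \<beta>" using d by simp
      then have "a1 - d * p ((1/d) *\<^sub>R u1 - w) \<le> d * \<beta>" using d by (simp add: right_diff_distrib)
      also have "d * p ((1/d) *\<^sub>R u1 - w) = p (d *\<^sub>R ((1/d) *\<^sub>R u1 - w))" using hom[of d] d by simp
      also have "d *\<^sub>R ((1/d) *\<^sub>R u1 - w) = u" using d e d_def by (simp add: algebra_simps)
      finally show ?thesis using e d_def by simp
    qed
  qed
  moreover have "H \<subseteq> H'"
  proof
    fix q assume "q \<in> H"
    then obtain u a where q: "q = (u,a)" "(u,a) \<in> H" by (cases q) auto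
    have "(u + 0 *\<^sub>R w, a + 0 * \<beta>) \<in> H'" unfolding H'_def using q(2) by blast
    then show "q \<in> H'" using q by simp
  qed
  moreover have "(w, \<beta>) \<in> H'"
  proof -
    have "(0 + 1 *\<^sub>R w, 0 + 1 * \<beta>) \<in> H'" unfolding H'_def using zero by blast
    then show ?thesis by simp
  qed
  moreover have "(w, \<beta>) \<notin> H" using w by (metis fst_conv image_eqI)
  ultimately show ?thesis by blast
qed

lemma lgD:
  assumes "lg p H"
  shows "(u,a)\<in>H \<Longrightarrow> (u,b)\<in>H \<Longrightarrow> a = b"
    and "(u,a)\<in>H \<Longrightarrow> (w,b)\<in>H \<Longrightarrow> (u+w, a+b) \<in> H"
    and "(u,a)\<in>H \<Longrightarrow> (c *\<^sub>R u, c*a) \<in> H"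
    and "(u,a)\<in>H \<Longrightarrow> a \<le> p u"
  using assms unfolding lg_def by blast+

lemma lgI:
  assumes "\<And>u a b. (u,a)\<in>H \<Longrightarrow> (u,b)\<in>H \<Longrightarrow> a = b"
    and "\<And>u a w b. (u,a)\<in>H \<Longrightarrow> (w,b)\<in>H \<Longrightarrow> (u+w, a+b) \<in> H"
    and "\<And>u a c. (u,a)\<in>H \<Longrightarrow> (c *\<^sub>R u, c*a) \<in> H"
    and "\<And>u a. (u,a)\<in>H \<Longrightarrow> a \<le> p u"
  shows "lg p H"
  using assms unfolding lg_def by blast

lemma hahn_banach_point:
  fixes p :: "'v::real_vector \<Rightarrow> real"
  assumes sub: "\<And>x y. p (x + y) \<le> p x + p y" and hom: "\<And>c x. c \<ge> 0 \<Longrightarrow> p (c *\<^sub>R x) = c * p x"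
  shows "\<exists>L. linear L \<and> (\<forall>x. L x \<le> p x) \<and> L v0 = p v0"
proof -
  have p0: "p 0 = 0" using hom[of 0 0] by simp
  have cle: "c * p v0 \<le> p (c *\<^sub>R v0)" for c
  proof (cases "c \<ge> 0")
    case True then show ?thesis using hom by simp
  next
    case False
    have "0 \<le> p (c *\<^sub>R v0) + p ((-c) *\<^sub>R v0)" using sub[of "c *\<^sub>R v0" "(-c) *\<^sub>R v0"] p0
      by (simp add: scaleR_left_distrib[symmetric])
    then show ?thesis using hom[of "-c" v0] False by simp
  qed
  define A where "A = {H. lg p H \<and> (v0, p v0) \<in> H}"
  define H0 where "H0 = {(c *\<^sub>R v0, c * p v0) | c. True}"
  have "lg p H0"
  proof (rule lgI)
    fix u a b assume "(u, a) \<in> H0" "(u, b) \<in> H0"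
    then obtain c1 c2 where e: "u = c1 *\<^sub>R v0" "a = c1 * p v0" "u = c2 *\<^sub>R v0" "b = c2 * p v0"
      unfolding H0_def by blast
    show "a = b"
    proof (cases "v0 = 0")
      case True then show ?thesis using e p0 by simp
    next
      case False
      then have "c1 = c2" using e by (metis scaleR_cancel_right)
      then show ?thesis using e by simp
    qed
  next
    fix u a w b assume "(u, a) \<in> H0" "(w, b) \<in> H0"
    then obtain c1 c2 where e: "u = c1 *\<^sub>R v0" "a = c1 * p v0" "w = c2 *\<^sub>R v0" "b = c2 * p v0"
      unfolding H0_def by blast
    have "u + w = (c1 + c2) *\<^sub>R v0" "a + b = (c1 + c2) * p v0" using e by (simp_all add: algebra_simps)
    then show "(u + w, a + b) \<in> H0" unfolding H0_def by blast
  next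
    fix u a c assume "(u, a) \<in> H0"
    then obtain c1 where e: "u = c1 *\<^sub>R v0" "a = c1 * p v0" unfolding H0_def by blast
    have "c *\<^sub>R u = (c * c1) *\<^sub>R v0" "c * a = (c * c1) * p v0" using e by simp_all
    then show "(c *\<^sub>R u, c * a) \<in> H0" unfolding H0_def by blast
  next
    fix u a assume "(u, a) \<in> H0"
    then show "a \<le> p u" unfolding H0_def using cle by blast
  qed
  moreover have "(v0, p v0) \<in> H0"
  proof -
    have "(1 *\<^sub>R v0, 1 * p v0) \<in> H0" unfolding H0_def by blast
    then show ?thesis by simp
  qed
  ultimately have H0: "H0 \<in> A" unfolding A_def by blast
  have "\<forall>C\<in>chains A. \<exists>U\<in>A. \<forall>X\<in>C. X \<subseteq> U"
  proof
    fix C assume C: "C \<in> chains A"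
    show "\<exists>U\<in>A. \<forall>X\<in>C. X \<subseteq> U"
    proof (cases "C = {}")
      case True then show ?thesis using H0 by blast
    next
      case False
      have CA: "C \<subseteq> A" and ch: "\<And>X Y. X \<in> C \<Longrightarrow> Y \<in> C \<Longrightarrow> X \<subseteq> Y \<or> Y \<subseteq> X"
        using C unfolding chains_def chain_subset_def by auto
      have lgX: "\<And>X. X \<in> C \<Longrightarrow> lg p X" and vX: "\<And>X. X \<in> C \<Longrightarrow> (v0, p v0) \<in> X" using CA A_def by auto
      have two: "\<exists>Z\<in>C. q1 \<in> Z \<and> q2 \<in> Z" if h: "q1 \<in> \<Union>C" "q2 \<in> \<Union>C" for q1 q2
      proof -
        obtain X Y where XY: "X\<in>C" "Y\<in>C" "q1\<in>X" "q2\<in>Y" using h by blast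
        show ?thesis using ch[OF XY(1,2)] XY by blast
      qed
      have "lg p (\<Union>C)"
      proof (rule lgI)
        fix u a b assume "(u, a) \<in> \<Union>C" "(u, b) \<in> \<Union>C"
        then obtain Z where "Z \<in> C" "(u,a) \<in> Z" "(u,b) \<in> Z" using two by blast
        then show "a = b" using lgD(1)[OF lgX] by blast
      next
        fix u a w b assume "(u, a) \<in> \<Union>C" "(w, b) \<in> \<Union>C"
        then obtain Z where "Z \<in> C" "(u,a) \<in> Z" "(w,b) \<in> Z" using two by blast
        then show "(u + w, a + b) \<in> \<Union>C" using lgD(2)[OF lgX] by blast
      next
        fix u a c assume "(u, a) \<in> \<Union>C"
        then obtain Z where "Z \<in> C" "(u,a) \<in> Z" by blast
        then show "(c *\<^sub>R u, c * a) \<in> \<Union>C" using lgD(3)[OF lgX] by blast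
      next
        fix u a assume "(u, a) \<in> \<Union>C"
        then obtain Z where "Z \<in> C" "(u,a) \<in> Z" by blast
        then show "a \<le> p u" using lgD(4)[OF lgX] by blast
      qed
      moreover have "(v0, p v0) \<in> \<Union>C" using False vX by blast
      ultimately have "\<Union>C \<in> A" unfolding A_def by blast
      then show ?thesis by blast
    qed
  qed
  then obtain M where M: "M \<in> A" and max: "\<And>X. X \<in> A \<Longrightarrow> M \<subseteq> X \<Longrightarrow> X = M"
    using Zorn_Lemma2[of A] by metis
  have lgM: "lg p M" and vM: "(v0, p v0) \<in> M" using M A_def by auto
  have all: "w \<in> fst ` M" for w
  proof (rule ccontr)
    assume "w \<notin> fst ` M"
    from hb_extend[OF sub hom lgM _ this] vM obtain H' where H': "lg p H'" "M \<subseteq> H'" "H' \<noteq> M" by blast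
    then have "H' \<in> A" using vM A_def by blast
    then show False using max[of H'] H' by simp
  qed
  define L where "L u = (THE a. (u,a) \<in> M)" for u
  have Lu: "L u = a" if "(u, a) \<in> M" for u a
    unfolding L_def
  proof (rule the_equality)
    show "(u,a) \<in> M" by (fact that)
    fix x assume "(u,x) \<in> M" then show "x = a" by (rule lgD(1)[OF lgM _ that])
  qed
  have LM: "(u, L u) \<in> M" for u
  proof -
    obtain q where "q \<in> M" "u = fst q" using all[of u] by blast
    then obtain a where a: "(u,a) \<in> M" by (cases q) auto
    then show ?thesis using Lu[OF a] by simp
  qed
  have "linear L"
  proof
    fix x y show "L (x + y) = L x + L y" by (rule Lu[OF lgD(2)[OF lgM LM LM]])
  next
    fix c x show "L (c *\<^sub>R x) = c *\<^sub>R L x" using Lu[OF lgD(3)[OF lgM LM]] by simp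
  qed
  moreover have "\<forall>x. L x \<le> p x" using lgD(4)[OF lgM LM] by simp
  moreover have "L v0 = p v0" using Lu[OF vM] .
  ultimately show ?thesis by blast
qed


definition tvs :: "'v::{real_vector,topological_space} itself \<Rightarrow> bool" where
  "tvs _ \<longleftrightarrow>
     continuous_on UNIV (\<lambda>(u::'v, v::'v). u + v) \<and>
     continuous_on UNIV (\<lambda>(c::real, v::'v). c *\<^sub>R v) \<and>
     (\<forall>U::'v set. open U \<and> 0 \<in> U \<longrightarrow> (\<exists>V. open V \<and> convex V \<and> 0 \<in> V \<and> V \<subseteq> U))"

lemma lcs_tvs: "lcs_space TYPE('x::{real_vector,t2_space}) \<Longrightarrow> tvs TYPE('x)"
  unfolding lcs_space_def tvs_def by blast

context
  fixes tv :: "'v::{real_vector,topological_space} itself"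
  assumes T: "tvs TYPE('v)"
begin

lemma tvs_add: "continuous_on UNIV (\<lambda>(u::'v, v::'v). u + v)"
  and tvs_scale: "continuous_on UNIV (\<lambda>(c::real, v::'v). c *\<^sub>R v)"
  and tvs_lc: "open (U::'v set) \<Longrightarrow> 0 \<in> U \<Longrightarrow> \<exists>V. open V \<and> convex V \<and> 0 \<in> V \<and> V \<subseteq> U"
  using T unfolding tvs_def by blast+

lemma cont_transl: "continuous_on UNIV (\<lambda>v::'v. a + v)"
proof -
  have "continuous_on UNIV ((\<lambda>(u,v). u+v) \<circ> (\<lambda>v::'v. (a,v)))"
    by (rule continuous_on_compose) (auto intro!: continuous_intros continuous_on_subset[OF tvs_add])
  then show ?thesis by (simp add: comp_def)
qed

lemma cont_scale: "continuous_on UNIV (\<lambda>v::'v. c *\<^sub>R v)"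
proof -
  have "continuous_on UNIV ((\<lambda>(c,v). c *\<^sub>R v) \<circ> (\<lambda>v::'v. (c,v)))"
    by (rule continuous_on_compose) (auto intro!: continuous_intros continuous_on_subset[OF tvs_scale])
  then show ?thesis by (simp add: comp_def)
qed

lemma cont_ray: "continuous_on UNIV (\<lambda>c::real. c *\<^sub>R (v::'v))"
proof -
  have "continuous_on UNIV ((\<lambda>(c,v). c *\<^sub>R v) \<circ> (\<lambda>c::real. (c,v)))"
    by (rule continuous_on_compose) (auto intro!: continuous_intros continuous_on_subset[OF tvs_scale])
  then show ?thesis by (simp add: comp_def)
qed

lemma open_vimage_UNIV: "continuous_on UNIV f \<Longrightarrow> open B \<Longrightarrow> open (f -` B)"
  using continuous_on_open_vimage[OF open_UNIV, of f] by auto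

lemma open_transl: "open (U::'v set) \<Longrightarrow> open ((+) a ` U)"
proof -
  assume U: "open U"
  have e: "(+) a ` U = (\<lambda>v. -a + v) -` U"
  proof
    show "(+) a ` U \<subseteq> (\<lambda>v. -a + v) -` U" by auto
    show "(\<lambda>v. -a + v) -` U \<subseteq> (+) a ` U"
    proof
      fix v assume "v \<in> (\<lambda>v. -a + v) -` U"
      then have "-a + v \<in> U" by simp
      moreover have "v = a + (-a + v)" by simp
      ultimately show "v \<in> (+) a ` U" by blast
    qed
  qed
  show ?thesis unfolding e by (rule open_vimage_UNIV[OF cont_transl U])
qed

lemma open_scale: "c \<noteq> 0 \<Longrightarrow> open (U::'v set) \<Longrightarrow> open ((\<lambda>v. c *\<^sub>R v) ` U)"
proof -
  assume c: "c \<noteq> 0" and U: "open U"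
  have "(\<lambda>v. c *\<^sub>R v) ` U = (\<lambda>v. (1/c) *\<^sub>R v) -` U"
  proof
    show "(\<lambda>v. c *\<^sub>R v) ` U \<subseteq> (\<lambda>v. (1/c) *\<^sub>R v) -` U" using c by auto
    show "(\<lambda>v. (1/c) *\<^sub>R v) -` U \<subseteq> (\<lambda>v. c *\<^sub>R v) ` U"
    proof
      fix v assume "v \<in> (\<lambda>v. (1/c) *\<^sub>R v) -` U"
      then have "(1/c) *\<^sub>R v \<in> U" by simp
      moreover have "v = c *\<^sub>R ((1/c) *\<^sub>R v)" using c by simp
      ultimately show "v \<in> (\<lambda>v. c *\<^sub>R v) ` U" by blast
    qed
  qed
  then show ?thesis using open_vimage_UNIV[OF cont_scale U] by simp
qed

lemma absorb:
  assumes "open (U::'v set)" "0 \<in> U"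
  shows "\<exists>\<delta>>0. \<forall>s. \<bar>s\<bar> < \<delta> \<longrightarrow> s *\<^sub>R v \<in> U"
proof -
  have "open ((\<lambda>c::real. c *\<^sub>R v) -` U)" using open_vimage_UNIV[OF cont_ray assms(1)] .
  moreover have "(0::real) \<in> (\<lambda>c::real. c *\<^sub>R v) -` U" using assms by simp
  ultimately obtain \<delta> where "\<delta> > 0" "ball 0 \<delta> \<subseteq> (\<lambda>c::real. c *\<^sub>R v) -` U"
    using open_contains_ball by blast
  show ?thesis
  proof (intro exI[of _ \<delta>] conjI allI impI)
    show "\<delta> > 0" by fact
    fix s :: real assume "\<bar>s\<bar> < \<delta>"
    then have "s \<in> ball 0 \<delta>" by (simp add: dist_real_def)
    then show "s *\<^sub>R v \<in> U" using \<open>ball 0 \<delta> \<subseteq> _\<close> by auto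
  qed
qed

definition mink :: "'v set \<Rightarrow> 'v \<Rightarrow> real" where
  "mink D v = Inf {t. 0 < t \<and> (1/t) *\<^sub>R v \<in> D}"

lemma convex0_scale: "convex D \<Longrightarrow> 0 \<in> D \<Longrightarrow> d \<in> D \<Longrightarrow> 0 \<le> l \<Longrightarrow> l \<le> 1 \<Longrightarrow> l *\<^sub>R d \<in> D"
  using convexD[of D d 0 l "1 - l"] by simp

context
  fixes D :: "'v set"
  assumes Dc: "convex D" and Do: "open D" and D0: "0 \<in> D"
begin

lemma mink_ne: "{t. 0 < t \<and> (1/t) *\<^sub>R v \<in> D} \<noteq> {}"
proof -
  obtain \<delta> where d: "\<delta> > 0" "\<And>s. \<bar>s\<bar> < \<delta> \<Longrightarrow> s *\<^sub>R v \<in> D" using absorb[OF Do D0] by blast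
  have "(1/(2/\<delta>)) *\<^sub>R v \<in> D" using d by simp
  moreover have "0 < 2/\<delta>" using d by simp
  ultimately show ?thesis by blast
qed

lemma mink_bdd: "bdd_below {t. 0 < t \<and> (1/t) *\<^sub>R v \<in> D}"
  by (rule bdd_belowI[of _ 0]) auto

lemma mink_up: "0 < t \<Longrightarrow> (1/t) *\<^sub>R v \<in> D \<Longrightarrow> t \<le> t' \<Longrightarrow> (1/t') *\<^sub>R v \<in> D"
proof -
  assume t: "0 < t" "(1/t) *\<^sub>R v \<in> D" "t \<le> t'"
  have "(t/t') *\<^sub>R ((1/t) *\<^sub>R v) \<in> D" by (rule convex0_scale[OF Dc D0 t(2)]) (use t in simp_all)
  moreover have "(t/t') *\<^sub>R ((1/t) *\<^sub>R v) = (1/t') *\<^sub>R v" using t by simp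
  ultimately show ?thesis by metis
qed

lemma mink_gt: "mink D v < t \<Longrightarrow> 0 < t \<and> (1/t) *\<^sub>R v \<in> D"
proof -
  assume "mink D v < t"
  then obtain s where s: "0 < s" "(1/s) *\<^sub>R v \<in> D" "s < t"
    using cInf_lessD[OF mink_ne] unfolding mink_def by blast
  then show ?thesis using mink_up[OF s(1,2)] by simp
qed

lemma mink_nonneg: "0 \<le> mink D v"
  unfolding mink_def by (rule cInf_greatest[OF mink_ne]) auto

lemma mink_in: "v \<in> D \<Longrightarrow> mink D v \<le> 1"
  unfolding mink_def by (rule cInf_lower[OF _ mink_bdd]) auto

lemma mink_out: "v \<notin> D \<Longrightarrow> 1 \<le> mink D v"
  unfolding mink_def
proof (rule cInf_greatest[OF mink_ne])
  fix t assume v: "v \<notin> D" and t: "t \<in> {t. 0 < t \<and> (1/t) *\<^sub>R v \<in> D}"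
  show "1 \<le> t"
  proof (rule ccontr)
    assume "\<not> 1 \<le> t"
    then have "t *\<^sub>R ((1/t) *\<^sub>R v) \<in> D" using convex0_scale[OF Dc D0, of "(1/t) *\<^sub>R v" t] t by simp
    then show False using v t by simp
  qed
qed

lemma mink_le_scale: "0 < c \<Longrightarrow> mink D (c *\<^sub>R v) \<le> c * mink D v"
proof -
  assume c: "0 < c"
  have "mink D (c *\<^sub>R v) \<le> c * mink D v + e" if e: "e > 0" for e
  proof -
    have "mink D v < mink D v + e/c" using e c by simp
    from mink_gt[OF this] have t: "0 < mink D v + e/c" "(1/(mink D v + e/c)) *\<^sub>R v \<in> D" by auto
    have "(1/(c * (mink D v + e/c))) *\<^sub>R (c *\<^sub>R v) = (1/(mink D v + e/c)) *\<^sub>R v" using c by simp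
    then have "c * (mink D v + e/c) \<in> {t. 0 < t \<and> (1/t) *\<^sub>R (c *\<^sub>R v) \<in> D}" using t c by simp
    then have "mink D (c *\<^sub>R v) \<le> c * (mink D v + e/c)" unfolding mink_def by (rule cInf_lower[OF _ mink_bdd])
    also have "\<dots> = c * mink D v + e" using c by (simp add: algebra_simps)
    finally show ?thesis .
  qed
  then show ?thesis by (rule field_le_epsilon)
qed

lemma mink_hom: "0 \<le> c \<Longrightarrow> mink D (c *\<^sub>R v) = c * mink D v"
proof -
  assume c: "0 \<le> c"
  show ?thesis
  proof (cases "c = 0")
    case True
    have "{t. 0 < t \<and> (1/t) *\<^sub>R (0::'v) \<in> D} = {0<..}" using D0 by auto
    then show ?thesis using True by (simp add: mink_def)
  next
    case False
    then have c: "0 < c" using c by simp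
    have "mink D v = mink D ((1/c) *\<^sub>R (c *\<^sub>R v))" using c by simp
    also have "\<dots> \<le> (1/c) * mink D (c *\<^sub>R v)" by (rule mink_le_scale) (use c in simp)
    finally have "c * mink D v \<le> c * ((1/c) * mink D (c *\<^sub>R v))" using c by (intro mult_left_mono) simp_all
    then have "c * mink D v \<le> mink D (c *\<^sub>R v)" using c by simp
    then show ?thesis using mink_le_scale[OF c, of v] by linarith
  qed
qed

lemma mink_sub: "mink D (x + y) \<le> mink D x + mink D y"
proof -
  have "mink D (x + y) \<le> mink D x + mink D y + e" if e: "e > 0" for e
  proof -
    define s where "s = mink D x + e/2"
    define t where "t = mink D y + e/2"
    have s: "0 < s" "(1/s) *\<^sub>R x \<in> D" using mink_gt[of x s] e s_def by auto
    have t: "0 < t" "(1/t) *\<^sub>R y \<in> D" using mink_gt[of y t] e t_def by auto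
    have "(s/(s+t)) *\<^sub>R ((1/s) *\<^sub>R x) + (t/(s+t)) *\<^sub>R ((1/t) *\<^sub>R y) \<in> D"
      using convexD[OF Dc s(2) t(2), of "s/(s+t)" "t/(s+t)"] s t by (simp add: add_divide_distrib[symmetric])
    moreover have "(s/(s+t)) *\<^sub>R ((1/s) *\<^sub>R x) + (t/(s+t)) *\<^sub>R ((1/t) *\<^sub>R y) = (1/(s+t)) *\<^sub>R (x + y)"
      using s t by (simp add: scaleR_add_right)
    ultimately have "s + t \<in> {t. 0 < t \<and> (1/t) *\<^sub>R (x + y) \<in> D}" using s t by simp
    then have "mink D (x + y) \<le> s + t" unfolding mink_def by (rule cInf_lower[OF _ mink_bdd])
    then show ?thesis using s_def t_def by simp
  qed
  then show ?thesis by (rule field_le_epsilon)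
qed

end

lemma linear_cont:
  assumes L: "linear (L::'v \<Rightarrow> real)" and N: "open N" "0 \<in> N" and b: "\<And>v. v \<in> N \<Longrightarrow> L v \<le> 1"
  shows "continuous_on UNIV L"
proof -
  define N' where "N' = N \<inter> uminus ` N"
  have "uminus ` N = (\<lambda>v. (-1) *\<^sub>R v) ` N" by simp
  then have N'o: "open N'" unfolding N'_def using open_scale[of "-1" N] N by auto
  have N'0: "0 \<in> N'" unfolding N'_def using N by (auto simp: image_iff intro!: bexI[of _ 0])
  have N'b: "\<bar>L v\<bar> \<le> 1" if "v \<in> N'" for v
  proof -
    have vN: "v \<in> N" "v \<in> uminus ` N" using that N'_def by auto
    then obtain w where w0: "w \<in> N" "v = - w" by blast
    have w: "w \<in> N" "v = - w" "v \<in> N" using w0 vN by auto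
    have "L v = - L w" using w linear_neg[OF L] by simp
    then show ?thesis using b[OF w(1)] b[OF w(3)] by simp
  qed
  have "open (L -` B)" if B: "open B" for B
  proof (subst open_subopen, intro ballI)
    fix v0 assume "v0 \<in> L -` B"
    then obtain \<eta> where \<eta>: "\<eta> > 0" "ball (L v0) \<eta> \<subseteq> B" using B open_contains_ball by blast
    define T where "T = (+) v0 ` ((\<lambda>v. (\<eta>/2) *\<^sub>R v) ` N')"
    have "open T" unfolding T_def using open_transl open_scale N'o \<eta> by simp
    moreover have "v0 \<in> T" unfolding T_def using N'0 by (auto simp: image_iff intro!: bexI[of _ 0])
    moreover have "T \<subseteq> L -` B"
    proof
      fix u assume "u \<in> T"
      then obtain n where n: "n \<in> N'" "u = v0 + (\<eta>/2) *\<^sub>R n" unfolding T_def by auto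
      have "L u = L v0 + (\<eta>/2) * L n" using n linear_add[OF L] linear_scale[OF L] by simp
      moreover have "\<bar>(\<eta>/2) * L n\<bar> \<le> \<eta>/2" using N'b[OF n(1)] \<eta>
        by (simp add: abs_mult mult_left_le)
      ultimately have "L u \<in> ball (L v0) \<eta>" using \<eta> by (simp add: dist_real_def)
      then show "u \<in> L -` B" using \<eta> by auto
    qed
    ultimately show "\<exists>T. open T \<and> v0 \<in> T \<and> T \<subseteq> L -` B" by blast
  qed
  then show ?thesis using continuous_on_open_vimage[OF open_UNIV] by auto
qed

lemma sep:
  assumes E: "convex (E::'v set)" and Ob: "open Ob" "p \<in> Ob" "Ob \<inter> E = {}"
  shows "\<exists>L::'v \<Rightarrow> real. linear L \<and> continuous_on UNIV L \<and> (\<exists>m. (\<forall>e\<in>E. L e \<le> m) \<and> m < L p)"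
proof (cases "E = {}")
  case True
  have "linear (\<lambda>_::'v. 0::real)" by (rule linear_zero)
  moreover have "continuous_on UNIV (\<lambda>_::'v. 0::real)" by (rule continuous_on_const)
  moreover have "\<exists>m. (\<forall>e\<in>E. (\<lambda>_::'v. 0::real) e \<le> m) \<and> m < (\<lambda>_::'v. 0::real) p"
    using True by (intro exI[of _ "-1"]) simp
  ultimately show ?thesis by (intro exI[of _ "\<lambda>_::'v. 0::real"]) auto
next
  case False
  then obtain e0 where e0: "e0 \<in> E" by blast
  have "open ((+) (-p) ` Ob)" using Ob by (intro open_transl) auto
  moreover have "0 \<in> (+) (-p) ` Ob" using Ob by (auto simp: image_iff intro!: bexI[of _ p])
  ultimately obtain V where V: "open V" "convex V" "0 \<in> V" "V \<subseteq> (+) (-p) ` Ob" using tvs_lc by blast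
  define W where "W = (+) p ` V"
  have Wo: "open W" unfolding W_def using V by (intro open_transl) auto
  have Wc: "convex W" unfolding W_def using V by (intro convex_translation) auto
  have pW: "p \<in> W" unfolding W_def using V by (auto simp: image_iff intro!: bexI[of _ 0])
  have WO: "W \<subseteq> Ob" unfolding W_def using V(4) by auto
  define D where "D = (\<Union>e\<in>E. \<Union>w\<in>W. {e - w})"
  have Dc: "convex D" unfolding D_def by (rule convex_differences[OF E Wc])
  have Deq: "D = (\<Union>e\<in>E. (+) e ` ((\<lambda>v. (-1) *\<^sub>R v) ` W))" unfolding D_def by auto
  have Do: "open D" unfolding Deq using open_transl open_scale[of "-1"] Wo by (intro open_UN) auto
  have D0: "0 \<notin> D" unfolding D_def using Ob WO by auto
  define d0 where "d0 = e0 - p"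
  have d0D: "d0 \<in> D" unfolding D_def d0_def using e0 pW by auto
  define D' where "D' = (+) (-d0) ` D"
  have D'o: "open D'" unfolding D'_def using Do by (intro open_transl) auto
  have D'c: "convex D'" unfolding D'_def using Dc by (intro convex_translation) auto
  have D'0: "0 \<in> D'" unfolding D'_def using d0D by (auto simp: image_iff intro!: bexI[of _ d0])
  define q where "q = - d0"
  have qD': "q \<notin> D'" unfolding D'_def q_def using D0 by auto
  obtain L where L: "linear L" "\<And>x. L x \<le> mink D' x" "L q = mink D' q"
    using hahn_banach_point[of "mink D'" q] mink_sub[OF D'c D'o D'0] mink_hom[OF D'c D'o D'0] by blast
  have Lq: "1 \<le> L q" using L(3) mink_out[OF D'c D'o D'0 qD'] by simp
  have LD': "L v \<le> 1" if "v \<in> D'" for v using L(2)[of v] mink_in[OF D'c D'o D'0 that] by simp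
  have Lc: "continuous_on UNIV L" by (rule linear_cont[OF L(1) D'o D'0 LD'])
  have LEW: "L e \<le> L w" if "e \<in> E" "w \<in> W" for e w
  proof -
    have "-d0 + (e - w) \<in> D'" unfolding D'_def D_def using that by auto
    then have "L (-d0 + (e - w)) \<le> 1" by (rule LD')
    moreover have "L (-d0 + (e - w)) = L q + L e - L w" unfolding q_def
      using linear_add[OF L(1)] linear_diff[OF L(1)] linear_neg[OF L(1)] by simp
    ultimately show ?thesis using Lq by simp
  qed
  obtain \<delta> where \<delta>: "\<delta> > 0" "\<And>s. \<bar>s\<bar> < \<delta> \<Longrightarrow> s *\<^sub>R (-q) \<in> V" using absorb[OF V(1,3)] by blast
  define w1 where "w1 = p + (\<delta>/2) *\<^sub>R (-q)"
  have w1W: "w1 \<in> W" unfolding w1_def W_def using \<delta> by auto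
  have "L w1 = L p - (\<delta>/2) * L q" unfolding w1_def using linear_diff[OF L(1)] linear_scale[OF L(1)] by simp
  also have "\<dots> < L p" using Lq \<delta> by (simp add: mult_pos_pos)
  finally show ?thesis using LEW[OF _ w1W] L(1) Lc by blast
qed

end


instantiation "fun" :: (type, real_vector) real_vector
begin
definition scaleR_fun :: "real \<Rightarrow> ('a \<Rightarrow> 'b) \<Rightarrow> 'a \<Rightarrow> 'b" where
  "scaleR_fun c f = (\<lambda>x. c *\<^sub>R f x)"
instance by standard (simp_all add: scaleR_fun_def fun_eq_iff scaleR_add_right scaleR_add_left)
end

lemma scaleR_fun_apply [simp]: "(c *\<^sub>R f) x = c *\<^sub>R f x"
  by (simp add: scaleR_fun_def)

lemma tvs_prod:
  assumes T: "tvs TYPE('a::{real_vector,topological_space})"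
  shows "tvs TYPE('a \<times> real)"
  unfolding tvs_def
proof (intro conjI allI impI)
  have c1: "continuous_on UNIV (\<lambda>P::('a\<times>real)\<times>('a\<times>real). fst (fst P) + fst (snd P))"
  proof -
    have "continuous_on UNIV ((\<lambda>(u,v). u+v) \<circ> (\<lambda>P::('a\<times>real)\<times>('a\<times>real). (fst (fst P), fst (snd P))))"
      by (rule continuous_on_compose) (auto intro!: continuous_intros continuous_on_subset[OF tvs_add[OF T]])
    then show ?thesis by (simp add: comp_def)
  qed
  have "continuous_on UNIV (\<lambda>P::('a\<times>real)\<times>('a\<times>real). (fst (fst P) + fst (snd P), snd (fst P) + snd (snd P)))"
    by (intro continuous_on_Pair c1 continuous_intros)
  moreover have "(\<lambda>P::('a\<times>real)\<times>('a\<times>real). (fst (fst P) + fst (snd P), snd (fst P) + snd (snd P))) = (\<lambda>(u, v). u + v)"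
    by (auto simp: fun_eq_iff)
  ultimately show "continuous_on UNIV (\<lambda>(u::'a\<times>real, v::'a\<times>real). u + v)" by metis
next
  have c1: "continuous_on UNIV (\<lambda>P::real\<times>('a\<times>real). fst P *\<^sub>R fst (snd P))"
  proof -
    have "continuous_on UNIV ((\<lambda>(c,v). c *\<^sub>R v) \<circ> (\<lambda>P::real\<times>('a\<times>real). (fst P, fst (snd P))))"
      by (rule continuous_on_compose) (auto intro!: continuous_intros continuous_on_subset[OF tvs_scale[OF T]])
    then show ?thesis by (simp add: comp_def)
  qed
  have "continuous_on UNIV (\<lambda>P::real\<times>('a\<times>real). (fst P *\<^sub>R fst (snd P), fst P * snd (snd P)))"
    by (intro continuous_on_Pair c1 continuous_intros)
  moreover have "(\<lambda>P::real\<times>('a\<times>real). (fst P *\<^sub>R fst (snd P), fst P * snd (snd P))) = (\<lambda>(c, v). c *\<^sub>R v)"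
    by (auto simp: fun_eq_iff)
  ultimately show "continuous_on UNIV (\<lambda>(c::real, v::'a\<times>real). c *\<^sub>R v)" by metis
next
  fix U :: "('a \<times> real) set" assume U: "open U \<and> 0 \<in> U"
  then obtain A B where AB: "open A" "open B" "(0,0) \<in> A \<times> B" "A \<times> B \<subseteq> U"
    using open_prod_elim[of U 0] by (auto simp: zero_prod_def)
  obtain V where V: "open V" "convex V" "0 \<in> V" "V \<subseteq> A" using tvs_lc[OF T AB(1)] AB(3) by auto
  obtain r where r: "r > 0" "ball 0 r \<subseteq> B" using AB(2,3) open_contains_ball by blast
  show "\<exists>V'. open V' \<and> convex V' \<and> 0 \<in> V' \<and> V' \<subseteq> U"
    using V r AB by (intro exI[of _ "V \<times> ball 0 r"]) (auto simp: open_Times convex_Times zero_prod_def)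
qed

lemma tvs_fun: "tvs TYPE('a \<Rightarrow> real)"
  unfolding tvs_def
proof (intro conjI allI impI)
  have ev: "continuous_on UNIV (\<lambda>x::'a\<Rightarrow>real. x i)" for i by simp
  show "continuous_on UNIV (\<lambda>(u::'a\<Rightarrow>real, v::'a\<Rightarrow>real). u + v)"
  proof (rule continuous_on_coordinatewise_then_product)
    fix i
    have "continuous_on UNIV (\<lambda>P::('a\<Rightarrow>real)\<times>('a\<Rightarrow>real). fst P i + snd P i)"
      by (intro continuous_intros continuous_on_compose2[OF ev]) auto
    moreover have "(\<lambda>P::('a\<Rightarrow>real)\<times>('a\<Rightarrow>real). fst P i + snd P i) = (\<lambda>P. (case P of (u, v) \<Rightarrow> u + v) i)"
      by (auto simp: fun_eq_iff)
    ultimately show "continuous_on UNIV (\<lambda>P. (case P of (u::'a\<Rightarrow>real, v) \<Rightarrow> u + v) i)" by metis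
  qed
  show "continuous_on UNIV (\<lambda>(c::real, v::'a\<Rightarrow>real). c *\<^sub>R v)"
  proof (rule continuous_on_coordinatewise_then_product)
    fix i
    have "continuous_on UNIV (\<lambda>P::real\<times>('a\<Rightarrow>real). fst P * snd P i)"
      by (intro continuous_intros continuous_on_compose2[OF ev]) auto
    moreover have "(\<lambda>P::real\<times>('a\<Rightarrow>real). fst P * snd P i) = (\<lambda>P. (case P of (c, v) \<Rightarrow> c *\<^sub>R v) i)"
      by (auto simp: fun_eq_iff)
    ultimately show "continuous_on UNIV (\<lambda>P. (case P of (c::real, v::'a\<Rightarrow>real) \<Rightarrow> c *\<^sub>R v) i)" by metis
  qed
next
  fix U :: "('a \<Rightarrow> real) set" assume U: "open U \<and> 0 \<in> U"
  then have "openin (product_topology (\<lambda>i. euclidean) UNIV) U" "(0::'a\<Rightarrow>real) \<in> U"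
    by (auto simp: open_fun_def)
  from product_topology_open_contains_basis[OF this] obtain X where
    X: "0 \<in> (\<Pi>\<^sub>E i\<in>UNIV. X i)" "\<And>i. open (X i)" "finite {i. X i \<noteq> UNIV}" "(\<Pi>\<^sub>E i\<in>UNIV. X i) \<subseteq> U"
    by auto
  define I where "I = {i. X i \<noteq> UNIV}"
  have X0: "0 \<in> X i" for i using X(1) by (auto simp: PiE_iff)
  have "\<forall>i. \<exists>r>0. ball 0 r \<subseteq> X i" using X(2) X0 open_contains_ball by blast
  then obtain r where r: "\<And>i. r i > 0" "\<And>i. ball 0 (r i) \<subseteq> X i" by metis
  define \<rho> where "\<rho> = Min (insert 1 (r ` I))"
  have fI: "finite I" using X(3) I_def by simp
  have \<rho>pos: "\<rho> > 0" unfolding \<rho>_def using fI r(1) by (subst Min_gr_iff) auto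
  have \<rho>le: "\<rho> \<le> r i" if "i \<in> I" for i unfolding \<rho>_def using fI that by (intro Min_le) auto
  define V where "V = {f::'a\<Rightarrow>real. \<forall>i\<in>I. f i \<in> ball 0 \<rho>}"
  have "open V" unfolding V_def using product_topology_basis'[of I "\<lambda>_. ball 0 \<rho>" "\<lambda>i. i"] fI by blast
  moreover have "convex V"
  proof (rule convexI)
    fix x y :: "'a \<Rightarrow> real" and u v :: real
    assume h: "x \<in> V" "y \<in> V" "0 \<le> u" "0 \<le> v" "u + v = 1"
    show "u *\<^sub>R x + v *\<^sub>R y \<in> V" unfolding V_def
    proof (rule CollectI, rule ballI)
      fix i assume "i \<in> I"
      then have "x i \<in> ball 0 \<rho>" "y i \<in> ball 0 \<rho>" using h V_def by auto
      then have "u *\<^sub>R x i + v *\<^sub>R y i \<in> ball 0 \<rho>" using h(3-5) convexD[OF convex_ball] by blast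
      then show "(u *\<^sub>R x + v *\<^sub>R y) i \<in> ball 0 \<rho>" by simp
    qed
  qed
  moreover have "0 \<in> V" unfolding V_def using \<rho>pos by simp
  moreover have "V \<subseteq> U"
  proof
    fix f assume "f \<in> V"
    have "f i \<in> X i" for i
    proof (cases "i \<in> I")
      case True
      then have "f i \<in> ball 0 (r i)" using \<open>f \<in> V\<close> \<rho>le[OF True] V_def by auto
      then show ?thesis using r(2)[of i] by blast
    next
      case False then show ?thesis using I_def by auto
    qed
    then have "f \<in> (\<Pi>\<^sub>E i\<in>UNIV. X i)" by (simp add: PiE_iff)
    then show "f \<in> U" using X(4) by auto
  qed
  ultimately show "\<exists>V. open V \<and> convex V \<and> 0 \<in> V \<and> V \<subseteq> U" by blast
qed


lemma sum_fun_apply: "finite I \<Longrightarrow> (\<Sum>i\<in>I. g i) (j::'a) = (\<Sum>i\<in>I. (g i j :: real))"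
  by (induction I rule: finite_induct) auto

lemma cco_least: "A \<subseteq> C \<Longrightarrow> fconvex C \<Longrightarrow> wstar_closed C \<Longrightarrow> wstar_cco A \<subseteq> C"
  unfolding wstar_cco_def by blast

lemma dual_fconvex: "fconvex dual"
  unfolding fconvex_def dual_def
proof (intro ballI allI impI CollectI conjI)
  fix a b :: "'a \<Rightarrow> real" and u :: real
  assume a: "a \<in> {\<phi>. linear \<phi> \<and> continuous_on UNIV \<phi>}" and b: "b \<in> {\<phi>. linear \<phi> \<and> continuous_on UNIV \<phi>}"
  then have la: "linear a" and lb: "linear b" and ca: "continuous_on UNIV a" and cb: "continuous_on UNIV b" by auto
  show "linear (\<lambda>y. (1 - u) * a y + u * b y)"
    by (rule linearI) (simp_all add: linear_add[OF la] linear_add[OF lb] linear_scale[OF la] linear_scale[OF lb] algebra_simps)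
  show "continuous_on UNIV (\<lambda>y. (1 - u) * a y + u * b y)" using ca cb by (intro continuous_intros)
qed

lemma dual_wclosed: "wstar_closed dual"
  unfolding wstar_closed_def by simp

lemma cco_dual: "A \<subseteq> dual \<Longrightarrow> wstar_cco A \<subseteq> dual"
  using cco_least dual_fconvex dual_wclosed by blast

lemma halfspace_cco:
  assumes "A \<subseteq> {\<psi>\<in>dual. \<psi> y - \<psi> x \<le> b}"
  shows "wstar_cco A \<subseteq> {\<psi>\<in>dual. \<psi> y - \<psi> x \<le> b}"
proof (rule cco_least[OF assms])
  show "fconvex {\<psi> \<in> dual. \<psi> y - \<psi> x \<le> b}"
    unfolding fconvex_def
  proof (intro ballI allI impI CollectI conjI)
    fix p q :: "'a \<Rightarrow> real" and u :: real
    assume p: "p \<in> {\<psi> \<in> dual. \<psi> y - \<psi> x \<le> b}" and q: "q \<in> {\<psi> \<in> dual. \<psi> y - \<psi> x \<le> b}" and u: "0 \<le> u \<and> u \<le> 1"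
    show "(\<lambda>y. (1 - u) * p y + u * q y) \<in> dual" using p q u dual_fconvex unfolding fconvex_def by blast
    have "(1 - u) * (p y - p x) + u * (q y - q x) \<le> (1 - u) * b + u * b"
      using p q u by (intro add_mono mult_left_mono) auto
    then show "(1 - u) * p y + u * q y - ((1 - u) * p x + u * q x) \<le> b" by (simp add: algebra_simps)
  qed
  have "closed {\<psi>::'a\<Rightarrow>real. \<psi> y - \<psi> x \<le> b}"
    by (intro closed_Collect_le continuous_intros continuous_on_product_coordinates)
  then show "wstar_closed {\<psi> \<in> dual. \<psi> y - \<psi> x \<le> b}"
    unfolding wstar_closed_def closedin_closed by (auto intro!: exI[of _ "{\<psi>::'a\<Rightarrow>real. \<psi> y - \<psi> x \<le> b}"])
qed

lemma fconvex_convex: "fconvex C \<Longrightarrow> convex (C :: ('a \<Rightarrow> real) set)"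
  unfolding fconvex_def convex_alt by (simp add: scaleR_fun_def plus_fun_def)

lemma cont_linear_repr:
  assumes L: "linear (L :: ('a \<Rightarrow> real) \<Rightarrow> real)" and c: "continuous_on UNIV L"
  shows "\<exists>I lam. finite I \<and> (\<forall>\<psi>. L \<psi> = (\<Sum>i\<in>I. lam i * \<psi> i))"
proof -
  have "open (L -` {-1<..<1})" using open_vimage_UNIV[OF tvs_fun c] by simp
  then have "openin (product_topology (\<lambda>i. euclidean) UNIV) (L -` {-1<..<1})" "(0::'a\<Rightarrow>real) \<in> L -` {-1<..<1}"
    using linear_0[OF L] by (auto simp: open_fun_def)
  from product_topology_open_contains_basis[OF this] obtain X where
    X: "0 \<in> (\<Pi>\<^sub>E i\<in>UNIV. X i)" "finite {i. X i \<noteq> UNIV}" "(\<Pi>\<^sub>E i\<in>UNIV. X i) \<subseteq> L -` {-1<..<1}"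
    by auto
  define I where "I = {i. X i \<noteq> UNIV}"
  have X0: "0 \<in> X i" for i using X(1) by (auto simp: PiE_iff)
  have fI: "finite I" using X(2) I_def by simp
  have van: "L \<psi> = 0" if "\<forall>i\<in>I. \<psi> i = 0" for \<psi> :: "'a \<Rightarrow> real"
  proof (rule ccontr)
    assume ne: "L \<psi> \<noteq> 0"
    define k where "k = 2 / L \<psi>"
    have "k *\<^sub>R \<psi> \<in> (\<Pi>\<^sub>E i\<in>UNIV. X i)"
    proof -
      have "(k *\<^sub>R \<psi>) i \<in> X i" for i
        using that X0 I_def by (cases "i \<in> I") auto
      then show ?thesis by (simp add: PiE_iff)
    qed
    then have "k *\<^sub>R \<psi> \<in> L -` {-1<..<1}" using X(3) by blast
    then have "L (k *\<^sub>R \<psi>) < 1" by simp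
    moreover have "L (k *\<^sub>R \<psi>) = 2" using linear_scale[OF L] ne k_def by simp
    ultimately show False by simp
  qed
  define \<delta> where "\<delta> i = (\<lambda>j::'a. if j = i then 1 else 0 :: real)" for i :: 'a
  have "L \<psi> = (\<Sum>i\<in>I. L (\<delta> i) * \<psi> i)" for \<psi>
  proof -
    define \<psi>' where "\<psi>' = (\<Sum>i\<in>I. \<psi> i *\<^sub>R \<delta> i)"
    have ap: "\<psi>' j = (if j \<in> I then \<psi> j else 0)" for j
    proof -
      have "\<psi>' j = (\<Sum>i\<in>I. (\<psi> i *\<^sub>R \<delta> i) j)" unfolding \<psi>'_def by (rule sum_fun_apply[OF fI])
      also have "\<dots> = (\<Sum>i\<in>I. \<psi> i * \<delta> i j)" by simp
      also have "\<dots> = (\<Sum>i\<in>I. if j = i then \<psi> i else 0)" by (rule sum.cong) (auto simp: \<delta>_def)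
      also have "\<dots> = (if j \<in> I then \<psi> j else 0)" using fI by (simp only: sum.delta' sum.delta)
      finally show ?thesis .
    qed
    have "L (\<psi> - \<psi>') = 0" by (rule van) (simp add: ap)
    then have "L \<psi> = L \<psi>'" using linear_diff[OF L] by simp
    also have "\<dots> = (\<Sum>i\<in>I. L (\<psi> i *\<^sub>R \<delta> i))" unfolding \<psi>'_def by (rule linear_sum[OF L])
    also have "\<dots> = (\<Sum>i\<in>I. \<psi> i * L (\<delta> i))" by (rule sum.cong) (simp_all add: linear_scale[OF L])
    finally show ?thesis by (simp add: mult_ac)
  qed
  then have "finite I \<and> (\<forall>\<psi>. L \<psi> = (\<Sum>i\<in>I. L (\<delta> i) * \<psi> i))" using fI by blast
  then show ?thesis by (intro exI[of _ I] exI[of _ "\<lambda>i. L (\<delta> i)"])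
qed

lemma wstar_sep:
  assumes A: "A \<subseteq> dual" and phi: "\<phi> \<in> dual" and notin: "\<phi> \<notin> wstar_cco A"
  shows "\<exists>z r. (\<forall>a\<in>A. a z \<le> r) \<and> r < \<phi> z"
proof -
  obtain C where C: "A \<subseteq> C" "fconvex C" "wstar_closed C" "\<phi> \<notin> C"
    using notin unfolding wstar_cco_def by blast
  have Cd: "C \<subseteq> dual" and Ccl: "closedin (top_of_set dual) C" using C(3) unfolding wstar_closed_def by auto
  have "openin (top_of_set dual) (dual - C)" using Ccl by (simp add: openin_diff)
  then obtain Ob where Ob: "open Ob" "dual - C = dual \<inter> Ob" unfolding openin_open by blast
  have "\<phi> \<in> Ob" using Ob phi C(4) by blast
  moreover have "Ob \<inter> C = {}" using Ob Cd by blast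
  ultimately have "\<exists>L::('a\<Rightarrow>real)\<Rightarrow>real. linear L \<and> continuous_on UNIV L \<and> (\<exists>m. (\<forall>e\<in>C. L e \<le> m) \<and> m < L \<phi>)"
    by (rule sep[OF tvs_fun fconvex_convex[OF C(2)] Ob(1)])
  then obtain L :: "('a\<Rightarrow>real)\<Rightarrow>real" and m where L: "linear L" "continuous_on UNIV L" "\<And>e. e \<in> C \<Longrightarrow> L e \<le> m" "m < L \<phi>"
    by blast
  obtain I lam where I: "finite I" "\<And>\<psi>. L \<psi> = (\<Sum>i\<in>I. lam i * \<psi> i)" using cont_linear_repr[OF L(1,2)] by blast
  define z where "z = (\<Sum>i\<in>I. lam i *\<^sub>R i)"
  have ev: "\<psi> z = L \<psi>" if "\<psi> \<in> dual" for \<psi>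
  proof -
    have "linear \<psi>" using that dual_def by auto
    then show ?thesis unfolding z_def I(2) using linear_sum linear_scale by (simp add: linear_sum linear_scale)
  qed
  have "\<forall>a\<in>A. a z \<le> m"
  proof
    fix a assume "a \<in> A"
    then have "a \<in> dual" "a \<in> C" using A C(1) by auto
    then show "a z \<le> m" using ev[OF \<open>a \<in> dual\<close>] L(3)[OF \<open>a \<in> C\<close>] by linarith
  qed
  moreover have "m < \<phi> z" using ev[OF phi] L(4) by simp
  ultimately show ?thesis by blast
qed


lemma dual_add: "a \<in> dual \<Longrightarrow> b \<in> dual \<Longrightarrow> (\<lambda>y. a y + b y) \<in> dual"
  unfolding dual_def
proof (intro CollectI conjI)
  assume a: "a \<in> {\<phi>. linear \<phi> \<and> continuous_on UNIV \<phi>}" and b: "b \<in> {\<phi>. linear \<phi> \<and> continuous_on UNIV \<phi>}"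
  then have la: "linear a" and lb: "linear b" and ca: "continuous_on UNIV a" and cb: "continuous_on UNIV b" by auto
  show "linear (\<lambda>y. a y + b y)"
    by (rule linearI) (simp_all add: linear_add[OF la] linear_add[OF lb] linear_scale[OF la] linear_scale[OF lb] algebra_simps)
  show "continuous_on UNIV (\<lambda>y. a y + b y)" using ca cb by (intro continuous_intros)
qed

lemma dual_scale: "a \<in> dual \<Longrightarrow> (\<lambda>y. k * a y) \<in> dual"
  unfolding dual_def
proof (intro CollectI conjI)
  assume a: "a \<in> {\<phi>. linear \<phi> \<and> continuous_on UNIV \<phi>}"
  then have la: "linear a" and ca: "continuous_on UNIV a" by auto
  show "linear (\<lambda>y. k * a y)"
    by (rule linearI) (simp_all add: linear_add[OF la] linear_scale[OF la] algebra_simps)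
  show "continuous_on UNIV (\<lambda>y. k * a y)" using ca by (intro continuous_intros)
qed

lemma dual_zero: "(\<lambda>_. 0) \<in> dual"
  unfolding dual_def by (auto intro: linearI)

lemma dual_linear: "a \<in> dual \<Longrightarrow> linear a" unfolding dual_def by auto

lemma ereal_between: "ereal l < e \<Longrightarrow> \<exists>\<mu>. l < \<mu> \<and> ereal \<mu> < e"
proof (cases e)
  case (real v) assume "ereal l < e" then show ?thesis using real by (intro exI[of _ "(l + v)/2"]) auto
next
  case PInf then show ?thesis by (intro exI[of _ "l + 1"]) auto
next
  case MInf assume "ereal l < e" then show ?thesis using MInf by simp
qed

lemma epi_nbhd:
  assumes lsc: "lsc_fun g" and lt: "ereal l0 < g y0"
  shows "\<exists>Ob. open Ob \<and> (y0, l0) \<in> Ob \<and> Ob \<inter> {(y, r::real). g y \<le> ereal r} = {}"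
proof -
  obtain \<mu> where mu: "l0 < \<mu>" "ereal \<mu> < g y0" using ereal_between[OF lt] by blast
  have "closed {y. g y \<le> ereal \<mu>}" using lsc unfolding lsc_fun_def by blast
  then have o1: "open (- {y. g y \<le> ereal \<mu>})" by (simp add: open_Compl)
  define Ob where "Ob = (- {y. g y \<le> ereal \<mu>}) \<times> {..<\<mu>}"
  have "open Ob" unfolding Ob_def using o1 by (intro open_Times) auto
  moreover have "(y0, l0) \<in> Ob" unfolding Ob_def using mu by auto
  moreover have "Ob \<inter> {(y, r::real). g y \<le> ereal r} = {}"
  proof (rule ccontr)
    assume "Ob \<inter> {(y, r::real). g y \<le> ereal r} \<noteq> {}"
    then obtain y r where yr: "(y, r) \<in> Ob" "g y \<le> ereal r" by auto
    then have "\<not> g y \<le> ereal \<mu>" "r < \<mu>" unfolding Ob_def by auto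
    moreover have "ereal r \<le> ereal \<mu>" using \<open>r < \<mu>\<close> by simp
    ultimately show False using yr(2) order_trans by blast
  qed
  ultimately show ?thesis by blast
qed

context
  fixes tx :: "'x::{real_vector,topological_space} itself"
  assumes TX: "tvs TYPE('x)"
begin

lemma sep_epi:
  assumes cvx: "convex_fun (g :: 'x \<Rightarrow> ereal)" and lsc: "lsc_fun g" and lt: "ereal l0 < g y0"
  shows "\<exists>b\<in>dual. \<exists>\<beta> m. (\<forall>y r. g y \<le> ereal r \<longrightarrow> b y + \<beta> * r \<le> m) \<and> m < b y0 + \<beta> * l0"
proof -
  define E where "E = {(y, r::real). g y \<le> ereal r}"
  have Ec: "convex E" using cvx unfolding convex_fun_def E_def .
  obtain Ob where Ob: "open Ob" "(y0, l0) \<in> Ob" "Ob \<inter> E = {}" using epi_nbhd[OF lsc lt] E_def by blast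
  have "\<exists>L::'x\<times>real\<Rightarrow>real. linear L \<and> continuous_on UNIV L \<and> (\<exists>m. (\<forall>e\<in>E. L e \<le> m) \<and> m < L (y0, l0))"
    by (rule sep[OF tvs_prod[OF TX] Ec Ob])
  then obtain L :: "'x\<times>real\<Rightarrow>real" and m where L: "linear L" "continuous_on UNIV L" "\<And>e. e \<in> E \<Longrightarrow> L e \<le> m" "m < L (y0, l0)"
    by blast
  define b where "b y = L (y, 0)" for y
  define \<beta> where "\<beta> = L (0, 1)"
  have Lyr: "L (y, r) = b y + \<beta> * r" for y r
  proof -
    have e: "(y, r) = (y, 0) + r *\<^sub>R (0, 1)" by simp
    have "L (y, r) = L ((y, 0) + r *\<^sub>R (0, 1))" by (rule arg_cong[OF e])
    also have "\<dots> = L (y, 0) + L (r *\<^sub>R (0, 1))" by (rule linear_add[OF L(1)])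
    also have "\<dots> = L (y, 0) + r * L (0, 1)" by (simp only: linear_scale[OF L(1)] real_scaleR_def)
    finally show ?thesis unfolding b_def \<beta>_def by simp
  qed
  have "linear b"
  proof (rule linearI)
    fix u v :: 'x show "b (u + v) = b u + b v" unfolding b_def using linear_add[OF L(1), of "(u,0)" "(v,0)"] by simp
  next
    fix c :: real and u :: 'x show "b (c *\<^sub>R u) = c *\<^sub>R b u" unfolding b_def using linear_scale[OF L(1), of c "(u,0)"] by simp
  qed
  moreover have "continuous_on UNIV b"
  proof -
    have "continuous_on UNIV (L \<circ> (\<lambda>y. (y, 0::real)))"
      by (rule continuous_on_compose) (auto intro!: continuous_intros continuous_on_subset[OF L(2)])
    then show ?thesis unfolding b_def comp_def by simp
  qed
  ultimately have "b \<in> dual" unfolding dual_def by simp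
  moreover have "\<forall>y r. g y \<le> ereal r \<longrightarrow> b y + \<beta> * r \<le> m"
  proof (intro allI impI)
    fix y r assume "g y \<le> ereal r"
    then have "(y, r) \<in> E" unfolding E_def by simp
    then have "L (y, r) \<le> m" by (rule L(3))
    then show "b y + \<beta> * r \<le> m" using Lyr by simp
  qed
  moreover have "m < b y0 + \<beta> * l0" using L(4) Lyr by simp
  ultimately show ?thesis by blast
qed

lemma fm_neg:
  assumes pr: "proper_fun (g :: 'x \<Rightarrow> ereal)" and b: "b \<in> dual" and neg: "\<beta> < 0"
    and H: "\<forall>y r. g y \<le> ereal r \<longrightarrow> b y + \<beta> * r \<le> m" and lt: "m < b y0 + \<beta> * l0"
  shows "\<exists>a\<in>dual. \<exists>c. (\<forall>y. ereal (a y + c) \<le> g y) \<and> l0 < a y0 + c"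
proof -
  define a where "a y = (-1/\<beta>) * b y" for y
  define c where "c = m / \<beta>"
  have ad: "a \<in> dual" unfolding a_def by (rule dual_scale[OF b])
  have "ereal (a y + c) \<le> g y" for y
  proof (cases "g y")
    case (real v)
    then have "b y + \<beta> * v \<le> m" using H by simp
    then have "(m - b y) / \<beta> \<le> v" using neg by (simp add: neg_divide_le_eq algebra_simps)
    moreover have "a y + c = (m - b y) / \<beta>" unfolding a_def c_def using neg by (simp add: field_simps)
    ultimately show ?thesis using real by simp
  next
    case PInf then show ?thesis by simp
  next
    case MInf then show ?thesis using pr unfolding proper_fun_def by simp
  qed
  moreover have "l0 < a y0 + c"
  proof -
    have "l0 < (m - b y0) / \<beta>" using neg lt by (simp add: neg_less_divide_eq algebra_simps)
    moreover have "a y0 + c = (m - b y0) / \<beta>" unfolding a_def c_def using neg by (simp add: field_simps)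
    ultimately show ?thesis by simp
  qed
  ultimately show ?thesis using ad by blast
qed

lemma fm_dom:
  assumes pr: "proper_fun (g :: 'x \<Rightarrow> ereal)" and cvx: "convex_fun g" and lsc: "lsc_fun g"
    and lt: "ereal l0 < g y0" and fin: "g y0 < \<infinity>"
  shows "\<exists>a\<in>dual. \<exists>c. (\<forall>y. ereal (a y + c) \<le> g y) \<and> l0 < a y0 + c"
proof -
  obtain b \<beta> m where bm: "b \<in> dual" "\<forall>y r. g y \<le> ereal r \<longrightarrow> b y + \<beta> * r \<le> m" "m < b y0 + \<beta> * l0"
    using sep_epi[OF cvx lsc lt] by blast
  obtain v where v: "g y0 = ereal v" using fin lt by (cases "g y0") auto
  have "l0 < v" using lt v by simp
  have "b y0 + \<beta> * v \<le> m" using bm(2) v by simp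
  then have "\<beta> * (v - l0) < 0" using bm(3) by (simp add: algebra_simps)
  then have "\<beta> < 0" using \<open>l0 < v\<close> by (simp add: mult_less_0_iff)
  then show ?thesis using fm_neg[OF pr bm(1) _ bm(2,3)] by blast
qed

lemma fm:
  assumes pr: "proper_fun (g :: 'x \<Rightarrow> ereal)" and cvx: "convex_fun g" and lsc: "lsc_fun g"
    and lt: "ereal l0 < g y0"
  shows "\<exists>a\<in>dual. \<exists>c. (\<forall>y. ereal (a y + c) \<le> g y) \<and> l0 < a y0 + c"
proof (cases "g y0 < \<infinity>")
  case True then show ?thesis using fm_dom[OF pr cvx lsc lt] by blast
next
  case False
  obtain b \<beta> m where bm: "b \<in> dual" "\<forall>y r. g y \<le> ereal r \<longrightarrow> b y + \<beta> * r \<le> m" "m < b y0 + \<beta> * l0"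
    using sep_epi[OF cvx lsc lt] by blast
  obtain y1 where y1: "g y1 < \<infinity>" using pr unfolding proper_fun_def by blast
  obtain v1 where v1: "g y1 = ereal v1" using y1 pr unfolding proper_fun_def by (cases "g y1") auto
  have "\<beta> \<le> 0"
  proof (rule ccontr)
    assume "\<not> \<beta> \<le> 0"
    then have bp: "\<beta> > 0" by simp
    define r where "r = max v1 ((m - b y1)/\<beta> + 1)"
    have "g y1 \<le> ereal r" using v1 r_def by simp
    then have "b y1 + \<beta> * r \<le> m" using bm(2) by blast
    moreover have "\<beta> * ((m - b y1)/\<beta> + 1) \<le> \<beta> * r" using bp r_def by (intro mult_left_mono) auto
    moreover have "\<beta> * ((m - b y1)/\<beta> + 1) = m - b y1 + \<beta>" using bp by (simp add: field_simps)
    ultimately show False using bp by simp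
  qed
  show ?thesis
  proof (cases "\<beta> < 0")
    case True then show ?thesis using fm_neg[OF pr bm(1) _ bm(2,3)] by blast
  next
    case False
    then have b0: "\<beta> = 0" using \<open>\<beta> \<le> 0\<close> by simp
    have "ereal (v1 - 1) < g y1" using v1 by simp
    from fm_dom[OF pr cvx lsc this y1] obtain a1 c1 where a1: "a1 \<in> dual" "\<forall>y. ereal (a1 y + c1) \<le> g y" by blast
    have gap: "m < b y0" using bm(3) b0 by simp
    define k where "k = max 0 ((l0 - a1 y0 - c1)/(b y0 - m) + 1)"
    define a where "a y = a1 y + k * b y" for y
    define c where "c = c1 - k * m"
    have ad: "a \<in> dual" unfolding a_def by (rule dual_add[OF a1(1) dual_scale[OF bm(1)]])
    have k0: "k \<ge> 0" unfolding k_def by simp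
    have "ereal (a y + c) \<le> g y" for y
    proof (cases "g y")
      case (real v)
      then have "g y \<le> ereal v" by simp
      then have "b y + \<beta> * v \<le> m" using bm(2) by blast
      then have "b y \<le> m" using b0 by simp
      then have "k * b y \<le> k * m" using k0 by (simp add: mult_left_mono)
      then have "a y + c \<le> a1 y + c1" unfolding a_def c_def by simp
      then have "ereal (a y + c) \<le> ereal (a1 y + c1)" by simp
      then show ?thesis using a1(2) order_trans by blast
    next
      case PInf then show ?thesis by simp
    next
      case MInf then show ?thesis using pr unfolding proper_fun_def by simp
    qed
    moreover have "l0 < a y0 + c"
    proof -
      have "((l0 - a1 y0 - c1)/(b y0 - m) + 1) * (b y0 - m) \<le> k * (b y0 - m)"
        using gap k_def by (intro mult_right_mono) auto
      moreover have "((l0 - a1 y0 - c1)/(b y0 - m) + 1) * (b y0 - m) = l0 - a1 y0 - c1 + (b y0 - m)"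
        using gap by (simp add: field_simps)
      ultimately have "l0 - a1 y0 - c1 + (b y0 - m) \<le> k * (b y0 - m)" by simp
      then show ?thesis unfolding a_def c_def using gap by (simp add: algebra_simps)
    qed
    ultimately show ?thesis using ad by blast
  qed
qed

end


context
  fixes tx :: "'x::{real_vector,topological_space} itself"
  assumes TX: "tvs TYPE('x)"
begin

lemma eps_dir:
  fixes g :: "'x \<Rightarrow> ereal"
  assumes pr: "proper_fun g" and cvx: "convex_fun g" and lsc: "lsc_fun g"
    and fin: "g x = ereal gx" and ep: "\<epsilon> > 0" and rr: "r < r'"
    and H: "\<And>s. s > 0 \<Longrightarrow> ereal (gx - \<epsilon>/2 + s * r') \<le> g (x + s *\<^sub>R z)"
  shows "\<exists>a\<in>eps_subdiff g \<epsilon> x. a z > r"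
proof -
  define r'' where "r'' = (r + r')/2"
  have r1: "r < r''" "r'' < r'" using rr r''_def by auto
  define Q where "Q = {(a z, a x + c - gx + \<epsilon>) | a c. a \<in> dual \<and> (\<forall>y. ereal (a y + c) \<le> g y)}"
  define K where "K = {(u, v::real). r'' \<le> u \<and> 0 \<le> v}"
  have FMx: "\<exists>a c. a \<in> dual \<and> (\<forall>y. ereal (a y + c) \<le> g y) \<and> s * a z + (a x + c - gx + \<epsilon>) > s * r' + \<epsilon>/4" if s: "s \<ge> 0" for s
  proof -
    have lt: "ereal (gx - \<epsilon> + s * r' + \<epsilon>/4) < g (x + s *\<^sub>R z)"
    proof (cases "s = 0")
      case True then show ?thesis using fin ep by simp
    next
      case False
      then have "ereal (gx - \<epsilon>/2 + s * r') \<le> g (x + s *\<^sub>R z)" using H s by simp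
      moreover have "ereal (gx - \<epsilon> + s * r' + \<epsilon>/4) < ereal (gx - \<epsilon>/2 + s * r')" using ep by simp
      ultimately show ?thesis by (rule_tac less_le_trans) auto
    qed
    obtain a c where ac: "a \<in> dual" "\<forall>y. ereal (a y + c) \<le> g y" "gx - \<epsilon> + s * r' + \<epsilon>/4 < a (x + s *\<^sub>R z) + c"
      using fm[OF TX pr cvx lsc lt] by blast
    have "a (x + s *\<^sub>R z) = a x + s * a z" using dual_linear[OF ac(1)] by (simp add: linear_add linear_scale)
    then show ?thesis using ac by (intro exI[of _ a] exI[of _ c]) auto
  qed
  have cx: "a x + c \<le> gx" if "\<forall>y. ereal (a y + c) \<le> g y" for a c
    using that[rule_format, of x] fin by simp
  show ?thesis
  proof (cases "Q \<inter> K = {}")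
    case False
    then obtain a c where ac: "a \<in> dual" "\<forall>y. ereal (a y + c) \<le> g y" "r'' \<le> a z" "0 \<le> a x + c - gx + \<epsilon>"
      unfolding Q_def K_def by blast
    have "a \<in> eps_subdiff g \<epsilon> x"
      unfolding eps_subdiff_def
    proof -
      have "g y \<ge> g x + ereal (a y - a x - \<epsilon>)" for y
      proof -
        have "g x + ereal (a y - a x - \<epsilon>) = ereal (gx + (a y - a x - \<epsilon>))" using fin by simp
        also have "\<dots> \<le> ereal (a y + c)" using ac(4) by simp
        also have "\<dots> \<le> g y" using ac(2) by blast
        finally show ?thesis .
      qed
      then show "a \<in> (if \<bar>g x\<bar> \<noteq> \<infinity> then {\<phi> \<in> dual. \<forall>y. g x + ereal (\<phi> y - \<phi> x - \<epsilon>) \<le> g y} else {})"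
        using fin ac(1) by simp
    qed
    moreover have "r < a z" using ac(3) r1 by linarith
    ultimately show ?thesis by blast
  next
    case True
    have Qc: "convex Q"
    proof (rule convexI)
      fix p q :: "real \<times> real" and u v :: real
      assume p: "p \<in> Q" and q: "q \<in> Q" and uv: "0 \<le> u" "0 \<le> v" "u + v = 1"
      obtain a1 c1 where 1: "p = (a1 z, a1 x + c1 - gx + \<epsilon>)" "a1 \<in> dual" "\<forall>y. ereal (a1 y + c1) \<le> g y"
        using p Q_def by blast
      obtain a2 c2 where 2: "q = (a2 z, a2 x + c2 - gx + \<epsilon>)" "a2 \<in> dual" "\<forall>y. ereal (a2 y + c2) \<le> g y"
        using q Q_def by blast
      define a where "a y = u * a1 y + v * a2 y" for y
      define c where "c = u * c1 + v * c2"
      have ad: "a \<in> dual" unfolding a_def by (rule dual_add[OF dual_scale[OF 1(2)] dual_scale[OF 2(2)]])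
      have am: "ereal (a y + c) \<le> g y" for y
      proof (cases "g y")
        case (real w)
        have "a1 y + c1 \<le> w" "a2 y + c2 \<le> w" using 1(3) 2(3) real by (metis ereal_less_eq(3))+
        then have "u * (a1 y + c1) + v * (a2 y + c2) \<le> u * w + v * w" using uv by (intro add_mono mult_left_mono) auto
        moreover have "u * w + v * w = w" using uv(3) by (simp add: distrib_right[symmetric])
        moreover have "a y + c = u * (a1 y + c1) + v * (a2 y + c2)" unfolding a_def c_def by (simp add: algebra_simps)
        ultimately have "a y + c \<le> w" by linarith
        then show ?thesis using real by simp
      next
        case PInf then show ?thesis by simp
      next
        case MInf then show ?thesis using pr unfolding proper_fun_def by simp
      qed
      have e2: "u * (a1 x + c1 - gx + \<epsilon>) + v * (a2 x + c2 - gx + \<epsilon>) = (u * a1 x + v * a2 x) + (u * c1 + v * c2) - (u + v) * (gx - \<epsilon>)"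
        by (simp add: algebra_simps)
      have "u *\<^sub>R p + v *\<^sub>R q = (u * a1 z + v * a2 z, u * (a1 x + c1 - gx + \<epsilon>) + v * (a2 x + c2 - gx + \<epsilon>))"
        unfolding 1(1) 2(1) by simp
      also have "\<dots> = (a z, a x + c - gx + \<epsilon>)" unfolding e2 a_def c_def using uv(3) by simp
      finally have "u *\<^sub>R p + v *\<^sub>R q = (a z, a x + c - gx + \<epsilon>)" .
      then show "u *\<^sub>R p + v *\<^sub>R q \<in> Q" unfolding Q_def using ad am by blast
    qed
    have Kc: "convex K" unfolding K_def
    proof (rule convexI)
      fix p q :: "real \<times> real" and u v :: real
      assume p: "p \<in> {(u, v). r'' \<le> u \<and> 0 \<le> v}" and q: "q \<in> {(u, v). r'' \<le> u \<and> 0 \<le> v}" and uv: "0 \<le> u" "0 \<le> v" "u + v = 1"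
      obtain p1 p2 q1 q2 where pq: "p = (p1, p2)" "q = (q1, q2)" "r'' \<le> p1" "0 \<le> p2" "r'' \<le> q1" "0 \<le> q2"
        using p q by auto
      have "u * r'' + v * r'' \<le> u * p1 + v * q1" using pq uv by (intro add_mono mult_left_mono) auto
      moreover have "u * r'' + v * r'' = r''" using uv(3) by (simp add: distrib_right[symmetric])
      ultimately have "r'' \<le> u * p1 + v * q1" by linarith
      moreover have "0 \<le> u * p2 + v * q2" using pq uv by simp
      ultimately show "u *\<^sub>R p + v *\<^sub>R q \<in> {(u, v). r'' \<le> u \<and> 0 \<le> v}" using pq by simp
    qed
    obtain a0 c0 where "a0 \<in> dual" "\<forall>y. ereal (a0 y + c0) \<le> g y" using FMx[of 0] by auto
    then have Qne: "Q \<noteq> {}" unfolding Q_def by blast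
    have "(r'', 0) \<in> K" unfolding K_def by simp
    then have Kne: "K \<noteq> {}" by blast
    obtain w \<gamma> where w: "w \<noteq> 0" "\<And>q. q \<in> Q \<Longrightarrow> inner w q \<le> \<gamma>" "\<And>k. k \<in> K \<Longrightarrow> inner w k \<ge> \<gamma>"
      using separating_hyperplane_sets[OF Qc Kc Qne Kne True] by blast
    obtain \<alpha> \<beta> where ab: "w = (\<alpha>, \<beta>)" by (cases w)
    have Kin: "w \<bullet> (u, v) \<ge> \<gamma>" if "r'' \<le> u" "0 \<le> v" for u v using w(3) that K_def by auto
    have \<gamma>: "\<gamma> \<le> \<alpha> * r''" using Kin[of r'' 0] ab by simp
    have \<alpha>: "\<alpha> \<ge> 0"
    proof (rule ccontr)
      assume "\<not> \<alpha> \<ge> 0"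
      then have an: "\<alpha> < 0" by simp
      define t where "t = (\<gamma> - \<alpha> * r'') / \<alpha> + 1"
      have "t \<ge> 1" using \<gamma> an unfolding t_def by (simp add: divide_nonpos_neg)
      have "\<gamma> \<le> \<alpha> * (r'' + t)" using Kin[of "r'' + t" 0] ab \<open>t \<ge> 1\<close> by simp
      moreover have "\<alpha> * (r'' + t) = \<gamma> + \<alpha>" unfolding t_def using an by (simp add: field_simps)
      ultimately show False using an by simp
    qed
    have \<beta>: "\<beta> \<ge> 0"
    proof (rule ccontr)
      assume "\<not> \<beta> \<ge> 0"
      then have bn: "\<beta> < 0" by simp
      define t where "t = (\<gamma> - \<alpha> * r'') / \<beta> + 1"
      have "t \<ge> 1" using \<gamma> bn unfolding t_def by (simp add: divide_nonpos_neg)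
      have "\<gamma> \<le> \<alpha> * r'' + \<beta> * t" using Kin[of r'' t] ab \<open>t \<ge> 1\<close> by simp
      moreover have "\<alpha> * r'' + \<beta> * t = \<gamma> + \<beta>" unfolding t_def using bn by (simp add: field_simps)
      ultimately show False using bn by simp
    qed
    have Qin: "\<alpha> * a z + \<beta> * (a x + c - gx + \<epsilon>) \<le> \<gamma>" if "a \<in> dual" "\<forall>y. ereal (a y + c) \<le> g y" for a c
    proof -
      have "(a z, a x + c - gx + \<epsilon>) \<in> Q" unfolding Q_def using that by blast
      then show ?thesis using w(2) ab by fastforce
    qed
    show ?thesis
    proof (cases "\<beta> = 0")
      case False
      then have bp: "\<beta> > 0" using \<beta> by simp
      define s where "s = \<alpha> / \<beta>"
      have s0: "s \<ge> 0" unfolding s_def using \<alpha> bp by simp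
      obtain a c where ac: "a \<in> dual" "\<forall>y. ereal (a y + c) \<le> g y" "s * a z + (a x + c - gx + \<epsilon>) > s * r' + \<epsilon>/4"
        using FMx[OF s0] by blast
      have "\<alpha> * a z + \<beta> * (a x + c - gx + \<epsilon>) \<le> \<alpha> * r''" using Qin[OF ac(1,2)] \<gamma> by simp
      then have "\<beta> * (s * a z + (a x + c - gx + \<epsilon>)) \<le> \<beta> * (s * r'')"
        unfolding s_def using bp by (simp add: algebra_simps)
      then have "s * a z + (a x + c - gx + \<epsilon>) \<le> s * r''" using bp by simp
      moreover have "s * r'' \<le> s * r'" using s0 r1 by (intro mult_left_mono) auto
      ultimately show ?thesis using ac(3) ep by simp
    next
      case True
      then have "\<alpha> \<noteq> 0" using w(1) ab by (auto simp: zero_prod_def)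
      then have ap: "\<alpha> > 0" using \<alpha> by simp
      define s where "s = \<epsilon> / (r' - r'')"
      have s0: "s > 0" unfolding s_def using ep r1 by simp
      obtain a c where ac: "a \<in> dual" "\<forall>y. ereal (a y + c) \<le> g y" "s * a z + (a x + c - gx + \<epsilon>) > s * r' + \<epsilon>/4"
        using FMx[of s] s0 by auto
      have "\<alpha> * a z \<le> \<alpha> * r''" using Qin[OF ac(1,2)] \<gamma> True by simp
      then have "a z \<le> r''" using ap by simp
      then have "s * a z \<le> s * r''" using s0 by (intro mult_left_mono) auto
      moreover have "a x + c \<le> gx" using cx[OF ac(2)] .
      moreover have "s * (r' - r'') = \<epsilon>" unfolding s_def using r1 by simp
      ultimately show ?thesis using ac(3) ep by (simp add: algebra_simps)
    qed
  qed
qed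

end


lemma ereal_scale_le: "\<rho> > 0 \<Longrightarrow> (ereal \<rho> * e \<le> ereal r) = (e \<le> ereal (r / \<rho>))"
  by (cases e) (auto simp: pos_le_divide_eq mult.commute)

lemma ereal_scale_mInf: "\<rho> > 0 \<Longrightarrow> (ereal \<rho> * e \<le> -\<infinity>) = (e \<le> -\<infinity>)"
  by (cases e) auto

lemma scale_fun_props:
  fixes g :: "'x::{real_vector,topological_space} \<Rightarrow> ereal"
  assumes r: "\<rho> > 0" and pr: "proper_fun g" and cv: "convex_fun g" and ls: "lsc_fun g"
  shows "proper_fun (\<lambda>y. ereal \<rho> * g y)" "convex_fun (\<lambda>y. ereal \<rho> * g y)" "lsc_fun (\<lambda>y. ereal \<rho> * g y)"
proof -
  show "proper_fun (\<lambda>y. ereal \<rho> * g y)"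
    unfolding proper_fun_def
  proof
    show "\<forall>y. ereal \<rho> * g y \<noteq> - \<infinity>"
    proof
      fix y show "ereal \<rho> * g y \<noteq> - \<infinity>" using pr r unfolding proper_fun_def by (cases "g y") auto
    qed
    obtain y where "g y < \<infinity>" using pr unfolding proper_fun_def by blast
    then have "ereal \<rho> * g y < \<infinity>" using r by (cases "g y") auto
    then show "\<exists>y. ereal \<rho> * g y < \<infinity>" by blast
  qed
  show "convex_fun (\<lambda>y. ereal \<rho> * g y)"
    unfolding convex_fun_def
  proof (rule convexI)
    fix p q :: "'x \<times> real" and u v :: real
    assume p: "p \<in> {(y, r). ereal \<rho> * g y \<le> ereal r}" and q: "q \<in> {(y, r). ereal \<rho> * g y \<le> ereal r}"
      and uv: "0 \<le> u" "0 \<le> v" "u + v = 1"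
    obtain y1 r1 y2 r2 where pq: "p = (y1, r1)" "q = (y2, r2)" by (cases p, cases q)
    have "g y1 \<le> ereal (r1/\<rho>)" "g y2 \<le> ereal (r2/\<rho>)" using p q pq ereal_scale_le[OF r] by auto
    then have "(y1, r1/\<rho>) \<in> {(y, r). g y \<le> ereal r}" "(y2, r2/\<rho>) \<in> {(y, r). g y \<le> ereal r}" by auto
    from convexD[OF cv[unfolded convex_fun_def] this uv]
    have "g (u *\<^sub>R y1 + v *\<^sub>R y2) \<le> ereal (u * (r1/\<rho>) + v * (r2/\<rho>))" by simp
    moreover have "u * (r1/\<rho>) + v * (r2/\<rho>) = (u * r1 + v * r2) / \<rho>" by (simp add: add_divide_distrib)
    ultimately have "ereal \<rho> * g (u *\<^sub>R y1 + v *\<^sub>R y2) \<le> ereal (u * r1 + v * r2)" using ereal_scale_le[OF r] by simp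
    then show "u *\<^sub>R p + v *\<^sub>R q \<in> {(y, r). ereal \<rho> * g y \<le> ereal r}" using pq by simp
  qed
  show "lsc_fun (\<lambda>y. ereal \<rho> * g y)"
    unfolding lsc_fun_def
  proof
    fix c :: ereal
    show "closed {y. ereal \<rho> * g y \<le> c}"
    proof (cases c)
      case (real c0)
      then have "{y. ereal \<rho> * g y \<le> c} = {y. g y \<le> ereal (c0/\<rho>)}" using ereal_scale_le[OF r] by simp
      then show ?thesis using ls unfolding lsc_fun_def by simp
    next
      case PInf then show ?thesis by simp
    next
      case MInf
      then have e: "{y. ereal \<rho> * g y \<le> c} = {y. g y \<le> -\<infinity>}" using ereal_scale_mInf[OF r] by simp
      have "closed {y. g y \<le> -\<infinity>}" using ls unfolding lsc_fun_def by blast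
      then show ?thesis unfolding e .
    qed
  qed
qed

lemma conv_interp:
  assumes cv: "convex_fun g" and "g u \<le> ereal \<alpha>" "g v \<le> ereal \<beta>" "0 \<le> l" "l \<le> 1"
  shows "g ((1 - l) *\<^sub>R u + l *\<^sub>R v) \<le> ereal ((1 - l) * \<alpha> + l * \<beta>)"
proof -
  have "(u, \<alpha>) \<in> {(y, r). g y \<le> ereal r}" "(v, \<beta>) \<in> {(y, r). g y \<le> ereal r}" using assms by auto
  from convexD[OF cv[unfolded convex_fun_def] this, of "1 - l" l] assms(4,5)
  show ?thesis by simp
qed


lemma compact_uniform:
  assumes cT: "compact T" and ne: "T \<noteq> {}"
    and loc: "\<forall>t\<in>T. \<exists>U \<delta>. openin (top_of_set T) U \<and> t \<in> U \<and> (\<delta>::real) > 0 \<and> (\<forall>t'\<in>U. P \<delta> t')"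
    and mono: "\<And>\<delta> \<delta>' t. P \<delta> t \<Longrightarrow> 0 < \<delta>' \<Longrightarrow> \<delta>' \<le> \<delta> \<Longrightarrow> P \<delta>' t"
  shows "\<exists>\<delta>>0. \<forall>t\<in>T. P \<delta> t"
proof -
  define C where "C = {U. openin (top_of_set T) U \<and> (\<exists>\<delta>>0. \<forall>t'\<in>U. P \<delta> t')}"
  have "\<forall>c\<in>C. openin (top_of_set T) c" unfolding C_def by blast
  moreover have "T \<subseteq> \<Union>C" unfolding C_def using loc by blast
  ultimately obtain D where D: "D \<subseteq> C" "finite D" "T \<subseteq> \<Union>D"
    using cT unfolding compact_eq_openin_cover by meson
  define dU where "dU U = (SOME \<delta>. \<delta> > 0 \<and> (\<forall>t'\<in>U. P \<delta> t'))" for U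
  have dU: "dU U > 0 \<and> (\<forall>t'\<in>U. P (dU U) t')" if "U \<in> D" for U
  proof -
    have "\<exists>\<delta>. \<delta> > 0 \<and> (\<forall>t'\<in>U. P \<delta> t')" using that D(1) C_def by blast
    then show ?thesis unfolding dU_def by (rule someI_ex)
  qed
  have Dne: "D \<noteq> {}" using D(3) ne by blast
  define \<delta> where "\<delta> = Min (dU ` D)"
  have \<delta>pos: "\<delta> > 0" unfolding \<delta>_def using D(2) Dne dU by (subst Min_gr_iff) auto
  have "P \<delta> t" if tT: "t \<in> T" for t
  proof -
    obtain U where U: "U \<in> D" "t \<in> U" using D(3) tT by blast
    have "\<delta> \<le> dU U" unfolding \<delta>_def using D(2) U(1) by (intro Min_le) auto
    then show ?thesis using mono[of "dU U" t \<delta>] dU[OF U(1)] U(2) \<delta>pos by blast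
  qed
  then show ?thesis using \<delta>pos by blast
qed

locale sset =
  fixes F :: "'t::t2_space \<Rightarrow> 'x::{real_vector,t2_space} \<Rightarrow> ereal"
    and T :: "'t set" and f :: "'x \<Rightarrow> ereal" and x :: 'x
  assumes lcs: "lcs_space TYPE('x)"
    and T_ne: "T \<noteq> {}"
    and Ft: "\<And>t. t \<in> T \<Longrightarrow> proper_fun (F t) \<and> convex_fun (F t) \<and> lsc_fun (F t)"
    and f_def: "f = (\<lambda>y. SUP t\<in>T. F t y)"
    and T_compact: "compact T"
    and usc: "\<And>z c. openin (top_of_set T) {t \<in> T. F t z < c}"
    and x_dom: "f x < \<infinity>"
begin

lemma TX: "tvs TYPE('x)" using lcs_tvs[OF lcs] .

lemma F_le: "t \<in> T \<Longrightarrow> F t y \<le> f y"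
  unfolding f_def by (rule SUP_upper)

lemma f_least: "(\<And>t. t \<in> T \<Longrightarrow> F t y \<le> B) \<Longrightarrow> f y \<le> B"
  unfolding f_def by (rule SUP_least)

lemma F_nm: "t \<in> T \<Longrightarrow> F t y \<noteq> -\<infinity>"
  using Ft unfolding proper_fun_def by blast

lemma f_nm: "f y \<noteq> -\<infinity>"
proof
  assume "f y = -\<infinity>"
  obtain t where "t \<in> T" using T_ne by blast
  then have "F t y \<le> -\<infinity>" using F_le \<open>f y = -\<infinity>\<close> by metis
  then show False using F_nm[OF \<open>t \<in> T\<close>] by simp
qed

lemma fx: "f x = ereal (real_of_ereal (f x))"
  using x_dom f_nm[of x] by (cases "f x") auto

lemma Fx: "t \<in> T \<Longrightarrow> F t x = ereal (real_of_ereal (F t x))"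
proof -
  assume t: "t \<in> T"
  have "F t x < \<infinity>" using F_le[OF t, of x] x_dom by (rule le_less_trans)
  then show ?thesis using F_nm[OF t, of x] by (cases "F t x") auto
qed

lemma Fx_le: "t \<in> T \<Longrightarrow> real_of_ereal (F t x) \<le> real_of_ereal (f x)"
  using F_le[of t x] Fx[of t] fx by (metis ereal_less_eq(3))

lemma Fx_lt: "t \<in> T \<Longrightarrow> F t x \<noteq> f x \<Longrightarrow> real_of_ereal (F t x) < real_of_ereal (f x)"
  using Fx_le[of t] Fx[of t] fx by (metis order_le_less)

lemma Tx_ne: "{t \<in> T. F t x = f x} \<noteq> {}"
proof
  assume none: "{t \<in> T. F t x = f x} = {}"
  define c where "c = real_of_ereal (f x)"
  have "\<forall>t\<in>T. \<exists>U \<delta>. openin (top_of_set T) U \<and> t \<in> U \<and> (\<delta>::real) > 0 \<and> (\<forall>t'\<in>U. F t' x \<le> ereal (c - \<delta>))"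
  proof
    fix t assume t: "t \<in> T"
    define \<delta> where "\<delta> = (c - real_of_ereal (F t x)) / 2"
    have lt: "real_of_ereal (F t x) < c" using Fx_lt[OF t] none t c_def by blast
    then have dp: "\<delta> > 0" unfolding \<delta>_def by simp
    have "real_of_ereal (F t x) < c - \<delta>" using lt \<delta>_def by simp
    then have "F t x < ereal (c - \<delta>)" by (subst Fx[OF t]) simp
    then have "t \<in> {t' \<in> T. F t' x < ereal (c - \<delta>)}" using t by simp
    moreover have "\<forall>t'\<in>{t' \<in> T. F t' x < ereal (c - \<delta>)}. F t' x \<le> ereal (c - \<delta>)" by auto
    ultimately show "\<exists>U \<delta>. openin (top_of_set T) U \<and> t \<in> U \<and> (\<delta>::real) > 0 \<and> (\<forall>t'\<in>U. F t' x \<le> ereal (c - \<delta>))"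
      using usc dp by blast
  qed
  moreover have "F t x \<le> ereal (c - \<delta>')" if "F t x \<le> ereal (c - \<delta>)" "0 < \<delta>'" "\<delta>' \<le> \<delta>" for t \<delta> \<delta>'
    using that by (meson diff_left_mono ereal_less_eq(3) order_trans)
  ultimately obtain \<delta> where d: "\<delta> > 0" "\<forall>t\<in>T. F t x \<le> ereal (c - \<delta>)"
    using compact_uniform[OF T_compact T_ne, of "\<lambda>\<delta> t. F t x \<le> ereal (c - \<delta>)"] by blast
  have "f x \<le> ereal (c - \<delta>)" using d(2) by (intro f_least) auto
  then have "c \<le> c - \<delta>" using fx c_def by (metis ereal_less_eq(3))
  then show False using d(1) by simp
qed

end


context sset
begin

lemma core:
  fixes \<epsilon> :: real and z :: 'x and r :: real and \<phi> :: "'x \<Rightarrow> real" and \<rho> :: "'t \<Rightarrow> real"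
  assumes ep: "\<epsilon> > 0" and phi: "\<phi> \<in> eps_subdiff f 0 x" and rphi: "r < \<phi> z"
    and i: "\<And>t a. t \<in> T \<Longrightarrow> F t x = f x \<Longrightarrow> a \<in> eps_subdiff (F t) \<epsilon> x \<Longrightarrow> a z \<le> r"
    and ii: "\<And>t. t \<in> T \<Longrightarrow> F t x \<noteq> f x \<Longrightarrow> \<exists>K. \<forall>b\<in>eps_subdiff (\<lambda>y. ereal (\<rho> t) * F t y) \<epsilon> x. b z \<le> K"
    and rho: "\<And>t. t \<in> T \<Longrightarrow> F t x \<noteq> f x \<Longrightarrow> \<rho> t > 0"
  shows False
proof -
  define c where "c = real_of_ereal (f x)"
  have fxc: "f x = ereal c" using fx c_def by simp
  define r' where "r' = (r + \<phi> z) / 2"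
  have r'1: "r < r'" "r' < \<phi> z" using rphi r'_def by auto
  define P where "P \<sigma> t' = (\<forall>s. 0 < s \<and> s \<le> \<sigma> \<longrightarrow> F t' (x + s *\<^sub>R z) < ereal (c + s * r'))" for \<sigma> t'
  have loc: "\<exists>U \<sigma>. openin (top_of_set T) U \<and> t \<in> U \<and> (\<sigma>::real) > 0 \<and> (\<forall>t'\<in>U. P \<sigma> t')" if tT: "t \<in> T" for t
  proof (cases "F t x = f x")
    case True
    have Ftc: "F t x = ereal c" using True fxc by simp
    have "\<exists>st>0. F t (x + st *\<^sub>R z) < ereal (c - \<epsilon>/2 + st * r')"
    proof (rule ccontr)
      assume nex: "\<not> (\<exists>st>0. F t (x + st *\<^sub>R z) < ereal (c - \<epsilon>/2 + st * r'))"
      have H: "ereal (c - \<epsilon>/2 + s * r') \<le> F t (x + s *\<^sub>R z)" if "s > 0" for s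
      proof -
        from nex that have "\<not> F t (x + s *\<^sub>R z) < ereal (c - \<epsilon>/2 + s * r')" by blast
        then show ?thesis by (simp add: not_less)
      qed
      have FtP: "proper_fun (F t)" "convex_fun (F t)" "lsc_fun (F t)" using Ft[OF tT] by auto
      obtain a where "a \<in> eps_subdiff (F t) \<epsilon> x" "a z > r"
        using eps_dir[OF TX FtP Ftc ep r'1(1) H] by blast
      then show False using i[OF tT True] by force
    qed
    then obtain st where st: "st > 0" "F t (x + st *\<^sub>R z) < ereal (c - \<epsilon>/2 + st * r')" by blast
    define W where "W = c - \<epsilon>/2 + st * r'"
    define U where "U = {t' \<in> T. F t' (x + st *\<^sub>R z) < ereal W}"
    have "openin (top_of_set T) U" unfolding U_def by (rule usc)
    moreover have "t \<in> U" unfolding U_def W_def using tT st by simp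
    moreover have "P st t'" if t'U: "t' \<in> U" for t'
      unfolding P_def
    proof (intro allI impI)
      fix s assume s: "0 < s \<and> s \<le> st"
      have t'T: "t' \<in> T" and lt: "F t' (x + st *\<^sub>R z) < ereal W" using t'U U_def by auto
      obtain w where w: "F t' (x + st *\<^sub>R z) = ereal w" using lt F_nm[OF t'T] by (cases "F t' (x + st *\<^sub>R z)") auto
      have wW: "w < W" using lt w by simp
      define l where "l = s / st"
      have l: "0 < l" "l \<le> 1" using s st l_def by auto
      have cv: "convex_fun (F t')" using Ft[OF t'T] by blast
      have "F t' x \<le> ereal c" using F_le[OF t'T, of x] fxc by simp
      moreover have "F t' (x + st *\<^sub>R z) \<le> ereal w" using w by simp
      ultimately have "F t' ((1 - l) *\<^sub>R x + l *\<^sub>R (x + st *\<^sub>R z)) \<le> ereal ((1 - l) * c + l * w)"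
        using conv_interp[OF cv _ _ less_imp_le[OF l(1)] l(2)] by blast
      moreover have "(1 - l) *\<^sub>R x + l *\<^sub>R (x + st *\<^sub>R z) = x + s *\<^sub>R z"
        using st l_def by (simp add: algebra_simps)
      moreover have "(1 - l) * c + l * w < c + s * r'"
      proof -
        have "l * w < l * W" using l wW by simp
        moreover have "(1 - l) * c + l * W = c - l * (\<epsilon>/2) + s * r'" unfolding W_def l_def using st by (simp add: field_simps)
        moreover have "l * (\<epsilon>/2) > 0" using l ep by simp
        ultimately show ?thesis by linarith
      qed
      ultimately have A: "F t' (x + s *\<^sub>R z) \<le> ereal ((1 - l) * c + l * w)" "ereal ((1 - l) * c + l * w) < ereal (c + s * r')" by simp_all
      show "F t' (x + s *\<^sub>R z) < ereal (c + s * r')" by (rule le_less_trans[OF A])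
    qed
    ultimately show ?thesis using st by blast
  next
    case False
    have rp: "\<rho> t > 0" using rho[OF tT False] .
    obtain K where K: "\<forall>b\<in>eps_subdiff (\<lambda>y. ereal (\<rho> t) * F t y) \<epsilon> x. b z \<le> K" using ii[OF tT False] by blast
    define e where "e = real_of_ereal (F t x)"
    have Fte: "F t x = ereal e" using Fx[OF tT] e_def by simp
    have ec: "e < c" using Fx_lt[OF tT False] e_def c_def by simp
    have "\<exists>st>0. F t (x + st *\<^sub>R z) < \<infinity>"
    proof (rule ccontr)
      assume "\<not> (\<exists>st>0. F t (x + st *\<^sub>R z) < \<infinity>)"
      then have inf0: "\<And>s. s > 0 \<Longrightarrow> \<not> F t (x + s *\<^sub>R z) < \<infinity>" by blast
      have inf: "F t (x + s *\<^sub>R z) = \<infinity>" if "s > 0" for s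
        using inf0[OF that] by (cases "F t (x + s *\<^sub>R z)") auto
      have FtP: "proper_fun (F t)" "convex_fun (F t)" "lsc_fun (F t)" using Ft[OF tT] by auto
      note G = scale_fun_props[OF rp FtP]
      have Gx: "ereal (\<rho> t) * F t x = ereal (\<rho> t * e)" using Fte by simp
      have H: "ereal (\<rho> t * e - \<epsilon>/2 + s * (K + 1)) \<le> ereal (\<rho> t) * F t (x + s *\<^sub>R z)" if "s > 0" for s
        using inf[OF that] rp by simp
      obtain b where "b \<in> eps_subdiff (\<lambda>y. ereal (\<rho> t) * F t y) \<epsilon> x" "b z > K"
        using eps_dir[OF TX G Gx ep _ H, of K] by auto
      then show False using K by force
    qed
    then obtain st where st: "st > 0" "F t (x + st *\<^sub>R z) < \<infinity>" by blast
    obtain \<beta> where \<beta>: "F t (x + st *\<^sub>R z) = ereal \<beta>" using st(2) F_nm[OF tT] by (cases "F t (x + st *\<^sub>R z)") auto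
    define d where "d = c - e"
    have dpos: "d > 0" using ec d_def by simp
    have eb: "e < c - d/2" unfolding d_def using ec by (simp add: field_simps)
    define Kt where "Kt = \<beta> + 1 - c + d/2 - st * r'"
    define m where "m = min 1 (d / (2 * (\<bar>Kt\<bar> + 1)))"
    have mpos: "m > 0" unfolding m_def using dpos by simp
    define \<sigma> where "\<sigma> = st * m"
    define U where "U = {t' \<in> T. F t' x < ereal (c - d/2)} \<inter> {t' \<in> T. F t' (x + st *\<^sub>R z) < ereal (\<beta> + 1)}"
    have "openin (top_of_set T) U" unfolding U_def by (intro openin_Int usc)
    moreover have "t \<in> U" unfolding U_def using tT Fte \<beta> eb by simp
    moreover have "\<sigma> > 0" unfolding \<sigma>_def using st mpos by simp
    moreover have "P \<sigma> t'" if t'U: "t' \<in> U" for t'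
      unfolding P_def
    proof (intro allI impI)
      fix s assume s: "0 < s \<and> s \<le> \<sigma>"
      have t'T: "t' \<in> T" and l1: "F t' x < ereal (c - d/2)" and l2: "F t' (x + st *\<^sub>R z) < ereal (\<beta> + 1)"
        using t'U U_def by auto
      define l where "l = s / st"
      have l: "0 \<le> l" "l \<le> m" using s st l_def \<sigma>_def by (auto simp: divide_le_eq mult.commute)
      have l1': "l \<le> 1" using l m_def by simp
      have cv: "convex_fun (F t')" using Ft[OF t'T] by blast
      have "F t' ((1 - l) *\<^sub>R x + l *\<^sub>R (x + st *\<^sub>R z)) \<le> ereal ((1 - l) * (c - d/2) + l * (\<beta> + 1))"
        using conv_interp[OF cv less_imp_le[OF l1] less_imp_le[OF l2] l(1) l1'] .
      moreover have "(1 - l) *\<^sub>R x + l *\<^sub>R (x + st *\<^sub>R z) = x + s *\<^sub>R z"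
        using st l_def by (simp add: algebra_simps)
      moreover have "(1 - l) * (c - d/2) + l * (\<beta> + 1) < c + s * r'"
      proof -
        have e1: "(1 - l) * (c - d/2) + l * (\<beta> + 1) - (c + s * r') = l * Kt - d/2"
          unfolding Kt_def l_def using st by (simp add: field_simps)
        have "l * Kt \<le> l * \<bar>Kt\<bar>" using l(1) by (simp add: mult_left_mono)
        also have "\<dots> \<le> (d / (2 * (\<bar>Kt\<bar> + 1))) * \<bar>Kt\<bar>" using l m_def by (intro mult_right_mono) auto
        also have "\<dots> < d/2"
        proof -
          have eq: "(d / (2 * (\<bar>Kt\<bar> + 1))) * \<bar>Kt\<bar> = (d/2) * (\<bar>Kt\<bar> / (\<bar>Kt\<bar> + 1))" by (simp add: field_simps)
          have "\<bar>Kt\<bar> / (\<bar>Kt\<bar> + 1) < 1" by simp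
          then have "(d/2) * (\<bar>Kt\<bar> / (\<bar>Kt\<bar> + 1)) < (d/2) * 1" using dpos by (intro mult_strict_left_mono) auto
          then show ?thesis using eq by linarith
        qed
        finally show ?thesis using e1 by linarith
      qed
      ultimately have A: "F t' (x + s *\<^sub>R z) \<le> ereal ((1 - l) * (c - d/2) + l * (\<beta> + 1))" "ereal ((1 - l) * (c - d/2) + l * (\<beta> + 1)) < ereal (c + s * r')" by simp_all
      show "F t' (x + s *\<^sub>R z) < ereal (c + s * r')" by (rule le_less_trans[OF A])
    qed
    ultimately show ?thesis by blast
  qed
  have mono: "P \<sigma>' t" if "P \<sigma> t" "0 < \<sigma>'" "\<sigma>' \<le> \<sigma>" for \<sigma> \<sigma>' t
    using that unfolding P_def by auto
  obtain \<sigma> where \<sigma>: "\<sigma> > 0" "\<forall>t\<in>T. P \<sigma> t"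
    using compact_uniform[OF T_compact T_ne, of P] loc mono by blast
  have "f (x + \<sigma> *\<^sub>R z) \<le> ereal (c + \<sigma> * r')"
  proof (rule f_least)
    fix t assume "t \<in> T"
    then have "F t (x + \<sigma> *\<^sub>R z) < ereal (c + \<sigma> * r')" using \<sigma> unfolding P_def by blast
    then show "F t (x + \<sigma> *\<^sub>R z) \<le> ereal (c + \<sigma> * r')" by simp
  qed
  moreover have "f x + ereal (\<phi> (x + \<sigma> *\<^sub>R z) - \<phi> x - 0) \<le> f (x + \<sigma> *\<^sub>R z)"
    using phi fxc unfolding eps_subdiff_def by auto
  moreover have "\<phi> (x + \<sigma> *\<^sub>R z) - \<phi> x = \<sigma> * \<phi> z"
  proof -
    have "linear \<phi>" using phi fxc unfolding eps_subdiff_def dual_def by auto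
    then show ?thesis by (simp add: linear_add linear_scale)
  qed
  ultimately have "ereal (c + \<sigma> * \<phi> z) \<le> f (x + \<sigma> *\<^sub>R z)" "f (x + \<sigma> *\<^sub>R z) \<le> ereal (c + \<sigma> * r')" using fxc by simp_all
  then have "ereal (c + \<sigma> * \<phi> z) \<le> ereal (c + \<sigma> * r')" by (rule order_trans)
  then have "\<sigma> * \<phi> z \<le> \<sigma> * r'" by simp
  then have "\<phi> z \<le> r'" using \<sigma>(1) by simp
  then show False using r'1 by simp
qed

end


context sset
begin

lemma eps_ne:
  assumes t: "t \<in> T" and r: "r > 0" and ep: "\<epsilon> > 0"
  shows "\<exists>a. a \<in> eps_subdiff (\<lambda>y. ereal r * F t y) \<epsilon> x"
proof -
  have FtP: "proper_fun (F t)" "convex_fun (F t)" "lsc_fun (F t)" using Ft[OF t] by auto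
  note G = scale_fun_props[OF r FtP]
  have Gx: "ereal r * F t x = ereal (r * real_of_ereal (F t x))" by (subst Fx[OF t]) simp
  have H: "ereal (r * real_of_ereal (F t x) - \<epsilon>/2 + s * 0) \<le> ereal r * F t (x + s *\<^sub>R 0)" if "s > 0" for s
    using Gx ep by simp
  obtain a where "a \<in> eps_subdiff (\<lambda>y. ereal r * F t y) \<epsilon> x" "a 0 > -1"
    using eps_dir[OF TX G Gx ep _ H, of "-1"] by auto
  then show ?thesis by blast
qed

lemma eps_ne1:
  assumes t: "t \<in> T" and ep: "\<epsilon> > 0"
  shows "\<exists>a. a \<in> eps_subdiff (F t) \<epsilon> x"
  using eps_ne[OF t _ ep, of 1] by (simp add: one_ereal_def[symmetric])

lemma eps_dual: "a \<in> eps_subdiff g \<epsilon> x \<Longrightarrow> a \<in> dual"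
  unfolding eps_subdiff_def by (auto split: if_splits)

lemma msumI: "a \<in> A \<Longrightarrow> b \<in> B \<Longrightarrow> (\<lambda>y. a y + b y) \<in> msum A B"
  unfolding msum_def by blast

lemma sub_sum:
  fixes rh :: "'t \<Rightarrow> real"
  assumes ep: "\<epsilon> > 0" and phi: "\<phi> \<in> eps_subdiff f 0 x"
    and rh: "\<And>t. t \<in> T \<Longrightarrow> F t x \<noteq> f x \<Longrightarrow> rh t > 0"
  shows "\<phi> \<in> wstar_cco (msum (\<Union>t\<in>{t \<in> T. F t x = f x}. eps_subdiff (F t) \<epsilon> x)
             (if {t \<in> T. F t x = f x} = T then {(\<lambda>_. 0)}
              else (\<Union>t\<in>T - {t \<in> T. F t x = f x}. smul_set {0, \<epsilon>}
                      (eps_subdiff (\<lambda>y. ereal (rh t) * F t y) \<epsilon> x))))"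
    (is "_ \<in> wstar_cco (msum ?A1 ?A2)")
proof (rule ccontr)
  assume notin: "\<phi> \<notin> wstar_cco (msum ?A1 ?A2)"
  have A1d: "?A1 \<subseteq> dual" using eps_dual by blast
  have A2d: "?A2 \<subseteq> dual"
  proof (cases "{t \<in> T. F t x = f x} = T")
    case True then show ?thesis using dual_zero by simp
  next
    case False
    show ?thesis
    proof
      fix b assume "b \<in> ?A2"
      then obtain t where "b \<in> smul_set {0, \<epsilon>} (eps_subdiff (\<lambda>y. ereal (rh t) * F t y) \<epsilon> x)"
        using False by auto
      then obtain l b' where "b = (\<lambda>y. l * b' y)" "b' \<in> eps_subdiff (\<lambda>y. ereal (rh t) * F t y) \<epsilon> x"
        unfolding smul_set_def by blast
      then show "b \<in> dual" using dual_scale[OF eps_dual] by simp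
    qed
  qed
  have Md: "msum ?A1 ?A2 \<subseteq> dual" unfolding msum_def using A1d A2d dual_add by blast
  have phid: "\<phi> \<in> dual" using eps_dual[OF phi] .
  obtain z r where zr: "\<forall>m\<in>msum ?A1 ?A2. m z \<le> r" "r < \<phi> z" using wstar_sep[OF Md phid notin] by blast
  have zero: "(\<lambda>_. 0) \<in> ?A2"
  proof (cases "{t \<in> T. F t x = f x} = T")
    case True then show ?thesis by simp
  next
    case False
    then obtain t where t: "t \<in> T" "F t x \<noteq> f x" by blast
    obtain b where b: "b \<in> eps_subdiff (\<lambda>y. ereal (rh t) * F t y) \<epsilon> x" using eps_ne[OF t(1) rh[OF t] ep] by blast
    have "(\<lambda>y. 0 * b y) \<in> smul_set {0, \<epsilon>} (eps_subdiff (\<lambda>y. ereal (rh t) * F t y) \<epsilon> x)"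
      unfolding smul_set_def using b by blast
    then show ?thesis using False t by auto
  qed
  obtain t0 where t0: "t0 \<in> T" "F t0 x = f x" using Tx_ne by blast
  obtain a0 where a0: "a0 \<in> eps_subdiff (F t0) \<epsilon> x" using eps_ne1[OF t0(1) ep] by blast
  have a0A: "a0 \<in> ?A1" using t0 a0 by blast
  have i: "a z \<le> r" if "t \<in> T" "F t x = f x" "a \<in> eps_subdiff (F t) \<epsilon> x" for t a
  proof -
    have "a \<in> ?A1" using that by blast
    from msumI[OF this zero] have "(\<lambda>y. a y + 0) \<in> msum ?A1 ?A2" by simp
    from zr(1)[rule_format, OF this] show ?thesis by simp
  qed
  have ii: "\<exists>K. \<forall>b\<in>eps_subdiff (\<lambda>y. ereal (rh t) * F t y) \<epsilon> x. b z \<le> K" if t: "t \<in> T" "F t x \<noteq> f x" for t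
  proof (intro exI ballI)
    fix b assume b: "b \<in> eps_subdiff (\<lambda>y. ereal (rh t) * F t y) \<epsilon> x"
    have ne: "{t \<in> T. F t x = f x} \<noteq> T" using t by blast
    have "(\<lambda>y. \<epsilon> * b y) \<in> ?A2" using ne t b unfolding smul_set_def by auto
    from msumI[OF a0A this] have "(\<lambda>y. a0 y + \<epsilon> * b y) \<in> msum ?A1 ?A2" by simp
    from zr(1)[rule_format, OF this] have "a0 z + \<epsilon> * b z \<le> r" by simp
    then show "b z \<le> (r - a0 z) / \<epsilon>" using ep by (simp add: le_divide_eq mult.commute)
  qed
  show False
    by (rule core[where \<epsilon>=\<epsilon> and z=z and r=r and \<phi>=\<phi> and \<rho>=rh], fact ep, fact phi, fact zr(2),
        (rule i; assumption), (rule ii; assumption), (rule rh; assumption))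
qed

lemma sub_union:
  fixes rh :: "'t \<Rightarrow> real"
  assumes ep: "\<epsilon> > 0" and phi: "\<phi> \<in> eps_subdiff f 0 x"
    and rh: "\<And>t. t \<in> T \<Longrightarrow> F t x \<noteq> f x \<Longrightarrow> rh t > 0"
  shows "\<phi> \<in> wstar_cco ((\<Union>t\<in>{t \<in> T. F t x = f x}. eps_subdiff (F t) \<epsilon> x) \<union>
             (\<Union>t\<in>T - {t \<in> T. F t x = f x}. smul_set {\<epsilon>}
                      (eps_subdiff (\<lambda>y. ereal (rh t) * F t y) \<epsilon> x)))"
    (is "_ \<in> wstar_cco (?A1 \<union> ?A2)")
proof (rule ccontr)
  assume notin: "\<phi> \<notin> wstar_cco (?A1 \<union> ?A2)"
  have A1d: "?A1 \<subseteq> dual" using eps_dual by blast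
  have A2d: "?A2 \<subseteq> dual"
  proof
    fix b assume "b \<in> ?A2"
    then obtain t where "b \<in> smul_set {\<epsilon>} (eps_subdiff (\<lambda>y. ereal (rh t) * F t y) \<epsilon> x)"
      by auto
    then obtain l b' where "b = (\<lambda>y. l * b' y)" "b' \<in> eps_subdiff (\<lambda>y. ereal (rh t) * F t y) \<epsilon> x"
      unfolding smul_set_def by blast
    then show "b \<in> dual" using dual_scale[OF eps_dual] by simp
  qed
  have Md: "?A1 \<union> ?A2 \<subseteq> dual" using A1d A2d by blast
  have phid: "\<phi> \<in> dual" using eps_dual[OF phi] .
  obtain z r where zr: "\<forall>m\<in>?A1 \<union> ?A2. m z \<le> r" "r < \<phi> z" using wstar_sep[OF Md phid notin] by blast
  have i: "a z \<le> r" if "t \<in> T" "F t x = f x" "a \<in> eps_subdiff (F t) \<epsilon> x" for t a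
    using that zr(1) by blast
  have ii: "\<exists>K. \<forall>b\<in>eps_subdiff (\<lambda>y. ereal (rh t) * F t y) \<epsilon> x. b z \<le> K" if t: "t \<in> T" "F t x \<noteq> f x" for t
  proof (intro exI ballI)
    fix b assume b: "b \<in> eps_subdiff (\<lambda>y. ereal (rh t) * F t y) \<epsilon> x"
    have "(\<lambda>y. \<epsilon> * b y) \<in> ?A2" using t b unfolding smul_set_def by auto
    then have "(\<lambda>y. \<epsilon> * b y) \<in> ?A1 \<union> ?A2" by blast
    from zr(1)[rule_format, OF this] have "\<epsilon> * b z \<le> r" by simp
    then show "b z \<le> r / \<epsilon>" using ep by (simp add: le_divide_eq mult.commute)
  qed
  show False
    by (rule core[where \<epsilon>=\<epsilon> and z=z and r=r and \<phi>=\<phi> and \<rho>=rh], fact ep, fact phi, fact zr(2),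
        (rule i; assumption), (rule ii; assumption), (rule rh; assumption))
qed

end


context sset
begin

lemma bnd1:
  assumes t: "t \<in> T" "F t x = f x" and a: "a \<in> eps_subdiff (F t) \<epsilon> x" and fy: "f y = ereal v"
  shows "a y - a x \<le> v - real_of_ereal (f x) + \<epsilon>"
proof -
  have Ftx: "F t x = ereal (real_of_ereal (f x))" using t fx by simp
  have "F t x + ereal (a y - a x - \<epsilon>) \<le> F t y" using a Ftx unfolding eps_subdiff_def by auto
  also have "\<dots> \<le> ereal v" using F_le[OF t(1), of y] fy by simp
  finally have "ereal (real_of_ereal (f x) + (a y - a x - \<epsilon>)) \<le> ereal v" using Ftx by simp
  then show ?thesis by simp
qed

lemma bnd2:
  assumes t: "t \<in> T" and r: "0 < \<rho>" "\<rho> \<le> 1" "\<rho> * (real_of_ereal (f x) - real_of_ereal (F t x)) \<le> \<epsilon>/2"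
    and b: "b \<in> eps_subdiff (\<lambda>y. ereal \<rho> * F t y) \<epsilon> x" and fy: "f y = ereal v"
  shows "b y - b x \<le> \<bar>v - real_of_ereal (f x)\<bar> + \<epsilon>/2 + \<epsilon>"
proof -
  define c where "c = real_of_ereal (f x)"
  define e where "e = real_of_ereal (F t x)"
  have Fte: "F t x = ereal e" using Fx[OF t] e_def by simp
  have Fty: "F t y \<le> ereal v" using F_le[OF t, of y] fy by simp
  obtain w where w: "F t y = ereal w" using Fty F_nm[OF t, of y] by (cases "F t y") auto
  have wv: "w \<le> v" using Fty w by simp
  have gx: "ereal \<rho> * F t x = ereal (\<rho> * e)" using Fte by simp
  have "ereal \<rho> * F t x + ereal (b y - b x - \<epsilon>) \<le> ereal \<rho> * F t y" using b gx unfolding eps_subdiff_def by auto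
  then have "\<rho> * e + (b y - b x - \<epsilon>) \<le> \<rho> * w" using gx w by simp
  moreover have "\<rho> * w \<le> \<rho> * v" using wv r by (simp add: mult_left_mono)
  ultimately have "b y - b x \<le> \<rho> * (v - c) + \<rho> * (c - e) + \<epsilon>" by (simp add: algebra_simps)
  moreover have "\<rho> * (v - c) \<le> \<bar>v - c\<bar>"
  proof -
    have "\<rho> * (v - c) \<le> \<rho> * \<bar>v - c\<bar>" using r by (simp add: mult_left_mono)
    also have "\<dots> \<le> 1 * \<bar>v - c\<bar>" using r by (intro mult_right_mono) auto
    finally show ?thesis by simp
  qed
  moreover have "\<rho> * (c - e) \<le> \<epsilon>/2" using r(3) c_def e_def by simp
  ultimately show ?thesis unfolding c_def[symmetric] by linarith
qed

lemma sup_sum: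
  fixes rh :: "real \<Rightarrow> 't \<Rightarrow> real"
  assumes rhp: "\<And>\<epsilon> t. \<epsilon> > 0 \<Longrightarrow> t \<in> T \<Longrightarrow> F t x \<noteq> f x \<Longrightarrow>
      0 < rh \<epsilon> t \<and> rh \<epsilon> t \<le> 1 \<and> rh \<epsilon> t * (real_of_ereal (f x) - real_of_ereal (F t x)) \<le> \<epsilon>/2"
    and mem: "\<And>\<epsilon>. \<epsilon> > 0 \<Longrightarrow> \<phi> \<in> wstar_cco (msum (\<Union>t\<in>{t \<in> T. F t x = f x}. eps_subdiff (F t) \<epsilon> x)
             (if {t \<in> T. F t x = f x} = T then {(\<lambda>_. 0)}
              else (\<Union>t\<in>T - {t \<in> T. F t x = f x}. smul_set {0, \<epsilon>}
                      (eps_subdiff (\<lambda>y. ereal (rh \<epsilon> t) * F t y) \<epsilon> x))))"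
  shows "\<phi> \<in> eps_subdiff f 0 x"
proof -
  define c where "c = real_of_ereal (f x)"
  have fxc: "f x = ereal c" using fx c_def by simp
  have key: "\<phi> \<in> {\<psi> \<in> dual. \<psi> y - \<psi> x \<le> (v - c) + \<epsilon> * (\<bar>v - c\<bar> + 3)}"
    if ep: "0 < \<epsilon>" "\<epsilon> \<le> 1" and fy: "f y = ereal v" for \<epsilon> y v
  proof -
    let ?A1 = "\<Union>t\<in>{t \<in> T. F t x = f x}. eps_subdiff (F t) \<epsilon> x"
    let ?A2 = "if {t \<in> T. F t x = f x} = T then {(\<lambda>_. 0)}
              else (\<Union>t\<in>T - {t \<in> T. F t x = f x}. smul_set {0, \<epsilon>}
                      (eps_subdiff (\<lambda>y. ereal (rh \<epsilon> t) * F t y) \<epsilon> x))"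
    have A2b: "b \<in> dual \<and> b y - b x \<le> \<epsilon> * (\<bar>v - c\<bar> + 2)" if bA: "b \<in> ?A2" for b
    proof (cases "{t \<in> T. F t x = f x} = T")
      case True
      then have "b = (\<lambda>_. 0)" using bA by simp
      then show ?thesis using dual_zero ep by simp
    next
      case False
      then obtain t where t: "t \<in> T" "F t x \<noteq> f x" "b \<in> smul_set {0, \<epsilon>} (eps_subdiff (\<lambda>y. ereal (rh \<epsilon> t) * F t y) \<epsilon> x)"
        using bA by auto
      then obtain l b' where lb: "b = (\<lambda>y. l * b' y)" "l \<in> {0, \<epsilon>}" "b' \<in> eps_subdiff (\<lambda>y. ereal (rh \<epsilon> t) * F t y) \<epsilon> x"
        unfolding smul_set_def by blast
      have r: "0 < rh \<epsilon> t" "rh \<epsilon> t \<le> 1" "rh \<epsilon> t * (real_of_ereal (f x) - real_of_ereal (F t x)) \<le> \<epsilon>/2"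
        using rhp[OF ep(1) t(1,2)] by auto
      have bb: "b' y - b' x \<le> \<bar>v - c\<bar> + \<epsilon>/2 + \<epsilon>" using bnd2[OF t(1) r lb(3) fy] c_def by simp
      have "l * (b' y - b' x) \<le> \<epsilon> * (\<bar>v - c\<bar> + 2)"
      proof (cases "l = 0")
        case True then show ?thesis using ep by simp
      next
        case False
        then have "l = \<epsilon>" using lb(2) by simp
        moreover have "\<epsilon> * (b' y - b' x) \<le> \<epsilon> * (\<bar>v - c\<bar> + 2)" using bb ep by (intro mult_left_mono) auto
        ultimately show ?thesis by simp
      qed
      moreover have "b \<in> dual" using lb(1) dual_scale[OF eps_dual[OF lb(3)]] by simp
      ultimately show ?thesis using lb(1) by (simp add: algebra_simps)
    qed
    have "msum ?A1 ?A2 \<subseteq> {\<psi> \<in> dual. \<psi> y - \<psi> x \<le> (v - c) + \<epsilon> * (\<bar>v - c\<bar> + 3)}"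
    proof
      fix m assume "m \<in> msum ?A1 ?A2"
      then obtain a b where m: "m = (\<lambda>y. a y + b y)" "a \<in> ?A1" "b \<in> ?A2" unfolding msum_def by blast
      then obtain t where t: "t \<in> T" "F t x = f x" "a \<in> eps_subdiff (F t) \<epsilon> x" by blast
      have ab: "a y - a x \<le> v - c + \<epsilon>" using bnd1[OF t(1,2,3) fy] c_def by simp
      have bb: "b \<in> dual" "b y - b x \<le> \<epsilon> * (\<bar>v - c\<bar> + 2)" using A2b[OF m(3)] by auto
      have "m \<in> dual" using m(1) dual_add[OF eps_dual[OF t(3)] bb(1)] by simp
      moreover have "m y - m x \<le> (v - c) + \<epsilon> * (\<bar>v - c\<bar> + 3)" using m(1) ab bb(2) by (simp add: algebra_simps)
      ultimately show "m \<in> {\<psi> \<in> dual. \<psi> y - \<psi> x \<le> (v - c) + \<epsilon> * (\<bar>v - c\<bar> + 3)}" by simp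
    qed
    then show ?thesis using halfspace_cco mem[OF ep(1)] by blast
  qed
  have "f x = ereal c" by (fact fxc)
  have phid: "\<phi> \<in> dual" using key[of 1 x c] fxc by simp
  have "f x + ereal (\<phi> y - \<phi> x - 0) \<le> f y" for y
  proof (cases "f y")
    case (real v)
    have "\<phi> y - \<phi> x \<le> v - c"
    proof (rule field_le_epsilon)
      fix e :: real assume e: "e > 0"
      define \<epsilon> where "\<epsilon> = min 1 (e / (\<bar>v - c\<bar> + 3))"
      have ep: "0 < \<epsilon>" "\<epsilon> \<le> 1" unfolding \<epsilon>_def using e by auto
      have "\<phi> y - \<phi> x \<le> (v - c) + \<epsilon> * (\<bar>v - c\<bar> + 3)" using key[OF ep real] by simp
      moreover have "\<epsilon> * (\<bar>v - c\<bar> + 3) \<le> e"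
      proof -
        have "\<epsilon> \<le> e / (\<bar>v - c\<bar> + 3)" unfolding \<epsilon>_def by simp
        then have "\<epsilon> * (\<bar>v - c\<bar> + 3) \<le> e / (\<bar>v - c\<bar> + 3) * (\<bar>v - c\<bar> + 3)" by (intro mult_right_mono) auto
        then show ?thesis by simp
      qed
      ultimately show "\<phi> y - \<phi> x \<le> v - c + e" by simp
    qed
    then show ?thesis using real fxc by simp
  next
    case PInf then show ?thesis by simp
  next
    case MInf then show ?thesis using f_nm by simp
  qed
  then show ?thesis using phid fxc unfolding eps_subdiff_def by simp
qed

lemma sup_union:
  fixes rh :: "real \<Rightarrow> 't \<Rightarrow> real"
  assumes rhp: "\<And>\<epsilon> t. \<epsilon> > 0 \<Longrightarrow> t \<in> T \<Longrightarrow> F t x \<noteq> f x \<Longrightarrow>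
      0 < rh \<epsilon> t \<and> rh \<epsilon> t \<le> 1 \<and> rh \<epsilon> t * (real_of_ereal (f x) - real_of_ereal (F t x)) \<le> \<epsilon>/2"
    and mn: "\<forall>y. f x \<le> f y"
    and mem: "\<And>\<epsilon>. \<epsilon> > 0 \<Longrightarrow> \<phi> \<in> wstar_cco ((\<Union>t\<in>{t \<in> T. F t x = f x}. eps_subdiff (F t) \<epsilon> x) \<union>
             (\<Union>t\<in>T - {t \<in> T. F t x = f x}. smul_set {\<epsilon>}
                      (eps_subdiff (\<lambda>y. ereal (rh \<epsilon> t) * F t y) \<epsilon> x)))"
  shows "\<phi> \<in> eps_subdiff f 0 x"
proof -
  define c where "c = real_of_ereal (f x)"
  have fxc: "f x = ereal c" using fx c_def by simp
  have key: "\<phi> \<in> {\<psi> \<in> dual. \<psi> y - \<psi> x \<le> (v - c) + \<epsilon> * (\<bar>v - c\<bar> + 3)}"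
    if ep: "0 < \<epsilon>" "\<epsilon> \<le> 1" and fy: "f y = ereal v" for \<epsilon> y v
  proof -
    let ?A1 = "\<Union>t\<in>{t \<in> T. F t x = f x}. eps_subdiff (F t) \<epsilon> x"
    let ?A2 = "\<Union>t\<in>T - {t \<in> T. F t x = f x}. smul_set {\<epsilon>} (eps_subdiff (\<lambda>y. ereal (rh \<epsilon> t) * F t y) \<epsilon> x)"
    have vc: "c \<le> v" using mn fy fxc by (metis ereal_less_eq(3))
    have "?A1 \<union> ?A2 \<subseteq> {\<psi> \<in> dual. \<psi> y - \<psi> x \<le> (v - c) + \<epsilon> * (\<bar>v - c\<bar> + 3)}"
    proof
      fix m assume "m \<in> ?A1 \<union> ?A2"
      then show "m \<in> {\<psi> \<in> dual. \<psi> y - \<psi> x \<le> (v - c) + \<epsilon> * (\<bar>v - c\<bar> + 3)}"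
      proof
        assume "m \<in> ?A1"
        then obtain t where t: "t \<in> T" "F t x = f x" "m \<in> eps_subdiff (F t) \<epsilon> x" by blast
        have "m y - m x \<le> v - c + \<epsilon>" using bnd1[OF t(1,2,3) fy] c_def by simp
        moreover have "0 \<le> \<epsilon> * (\<bar>v - c\<bar> + 2)" using ep by simp
        ultimately show ?thesis using eps_dual[OF t(3)] by (simp add: algebra_simps)
      next
        assume "m \<in> ?A2"
        then obtain t where t: "t \<in> T" "F t x \<noteq> f x" "m \<in> smul_set {\<epsilon>} (eps_subdiff (\<lambda>y. ereal (rh \<epsilon> t) * F t y) \<epsilon> x)"
          by auto
        then obtain l b' where lb: "m = (\<lambda>y. l * b' y)" "l \<in> {\<epsilon>}" "b' \<in> eps_subdiff (\<lambda>y. ereal (rh \<epsilon> t) * F t y) \<epsilon> x"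
          unfolding smul_set_def by blast
        have r: "0 < rh \<epsilon> t" "rh \<epsilon> t \<le> 1" "rh \<epsilon> t * (real_of_ereal (f x) - real_of_ereal (F t x)) \<le> \<epsilon>/2"
          using rhp[OF ep(1) t(1,2)] by auto
        have bb: "b' y - b' x \<le> \<bar>v - c\<bar> + \<epsilon>/2 + \<epsilon>" using bnd2[OF t(1) r lb(3) fy] c_def by simp
        have "\<epsilon> * (b' y - b' x) \<le> \<epsilon> * (\<bar>v - c\<bar> + 2)" using bb ep by (intro mult_left_mono) auto
        moreover have "\<epsilon> * (\<bar>v - c\<bar> + 2) \<le> (v - c) + \<epsilon> * (\<bar>v - c\<bar> + 3)"
        proof -
          have "\<epsilon> * \<bar>v - c\<bar> \<le> \<bar>v - c\<bar>" using ep by (simp add: mult_left_le_one_le)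
          then show ?thesis using vc ep by (simp add: algebra_simps)
        qed
        moreover have "m \<in> dual" using lb(1) dual_scale[OF eps_dual[OF lb(3)]] by simp
        ultimately show ?thesis using lb(1,2) by (simp add: algebra_simps)
      qed
    qed
    then show ?thesis using halfspace_cco mem[OF ep(1)] by blast
  qed
  have phid: "\<phi> \<in> dual" using key[of 1 x c] fxc by simp
  have "f x + ereal (\<phi> y - \<phi> x - 0) \<le> f y" for y
  proof (cases "f y")
    case (real v)
    have "\<phi> y - \<phi> x \<le> v - c"
    proof (rule field_le_epsilon)
      fix e :: real assume e: "e > 0"
      define \<epsilon> where "\<epsilon> = min 1 (e / (\<bar>v - c\<bar> + 3))"
      have ep: "0 < \<epsilon>" "\<epsilon> \<le> 1" unfolding \<epsilon>_def using e by auto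
      have "\<phi> y - \<phi> x \<le> (v - c) + \<epsilon> * (\<bar>v - c\<bar> + 3)" using key[OF ep real] by simp
      moreover have "\<epsilon> * (\<bar>v - c\<bar> + 3) \<le> e"
      proof -
        have "\<epsilon> \<le> e / (\<bar>v - c\<bar> + 3)" unfolding \<epsilon>_def by simp
        then have "\<epsilon> * (\<bar>v - c\<bar> + 3) \<le> e / (\<bar>v - c\<bar> + 3) * (\<bar>v - c\<bar> + 3)" by (intro mult_right_mono) auto
        then show ?thesis by simp
      qed
      ultimately show "\<phi> y - \<phi> x \<le> v - c + e" by simp
    qed
    then show ?thesis using real fxc by simp
  next
    case PInf then show ?thesis by simp
  next
    case MInf then show ?thesis using f_nm by simp
  qed
  then show ?thesis using phid fxc unfolding eps_subdiff_def by simp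
qed

end


context sset
begin

lemma rho_props:
  assumes ep: "\<epsilon> > 0" and t: "t \<in> T" "F t x \<noteq> f x"
  shows "0 < \<epsilon> / (2 * real_of_ereal (f x) - 2 * real_of_ereal (F t x) + \<epsilon>) \<and>
         \<epsilon> / (2 * real_of_ereal (f x) - 2 * real_of_ereal (F t x) + \<epsilon>) \<le> 1 \<and>
         \<epsilon> / (2 * real_of_ereal (f x) - 2 * real_of_ereal (F t x) + \<epsilon>) * (real_of_ereal (f x) - real_of_ereal (F t x)) \<le> \<epsilon>/2"
proof -
  define d where "d = real_of_ereal (f x) - real_of_ereal (F t x)"
  have dp: "d > 0" using Fx_lt[OF t] d_def by simp
  have D: "2 * real_of_ereal (f x) - 2 * real_of_ereal (F t x) + \<epsilon> = 2 * d + \<epsilon>" unfolding d_def by simp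
  have Dp: "2 * d + \<epsilon> > 0" using dp ep by simp
  have "0 < \<epsilon> / (2 * d + \<epsilon>)" using Dp ep by simp
  moreover have "\<epsilon> / (2 * d + \<epsilon>) \<le> 1" using Dp dp ep by simp
  moreover have "\<epsilon> / (2 * d + \<epsilon>) * d \<le> \<epsilon>/2"
  proof -
    have "\<epsilon> / (2 * d + \<epsilon>) * d = (\<epsilon> * d) / (2 * d + \<epsilon>)" by simp
    also have "\<dots> \<le> \<epsilon> / 2" using Dp ep dp by (simp add: divide_le_eq field_simps)
    finally show ?thesis .
  qed
  ultimately show ?thesis unfolding D d_def by simp
qed

end

theorem corollary6:
  fixes F :: "'t::t2_space \<Rightarrow> 'x::{real_vector,t2_space} \<Rightarrow> ereal"
    and T :: "'t set" and f :: "'x \<Rightarrow> ereal" and x :: 'x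
  assumes lcs: "lcs_space TYPE('x)"
    and T_ne: "T \<noteq> {}"
    and Ft: "\<And>t. t \<in> T \<Longrightarrow> proper_fun (F t) \<and> convex_fun (F t) \<and> lsc_fun (F t)"
    and f_def: "f = (\<lambda>y. SUP t\<in>T. F t y)"
    and T_compact: "compact T"
    and usc: "\<And>z c. openin (top_of_set T) {t \<in> T. F t z < c}"
    and x_dom: "f x < \<infinity>"
  shows
    "let Tx = {t \<in> T. F t x = f x};
         \<rho> = (\<lambda>\<epsilon> t. \<epsilon> / (2 * real_of_ereal (f x) - 2 * real_of_ereal (F t x) + \<epsilon>))
     in eps_subdiff f 0 x =
          (\<Inter>\<epsilon>\<in>{0<..}. wstar_cco (msum (\<Union>t\<in>Tx. eps_subdiff (F t) \<epsilon> x)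
             (if Tx = T then {(\<lambda>_. 0)}
              else (\<Union>t\<in>T - Tx. smul_set {0, \<epsilon>}
                      (eps_subdiff (\<lambda>y. ereal (\<rho> \<epsilon> t) * F t y) \<epsilon> x)))))
      \<and> ((\<forall>y. f x \<le> f y) \<longrightarrow>
          eps_subdiff f 0 x =
          (\<Inter>\<epsilon>\<in>{0<..}. wstar_cco ((\<Union>t\<in>Tx. eps_subdiff (F t) \<epsilon> x) \<union>
             (\<Union>t\<in>T - Tx. smul_set {\<epsilon>}
                      (eps_subdiff (\<lambda>y. ereal (\<rho> \<epsilon> t) * F t y) \<epsilon> x)))))"
proof -
  interpret S: sset F T f x
    by (rule sset.intro) (fact lcs T_ne f_def T_compact usc x_dom | rule Ft, assumption)+
  show ?thesis
    unfolding Let_def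
  proof (intro conjI impI equalityI subsetI INT_I)
    fix \<phi> and \<epsilon> :: real assume phi: "\<phi> \<in> eps_subdiff f 0 x" and ep: "\<epsilon> \<in> {0<..}"
    show "\<phi> \<in> wstar_cco (msum (\<Union>t\<in>{t \<in> T. F t x = f x}. eps_subdiff (F t) \<epsilon> x)
             (if {t \<in> T. F t x = f x} = T then {(\<lambda>_. 0)}
              else (\<Union>t\<in>T - {t \<in> T. F t x = f x}. smul_set {0, \<epsilon>}
                      (eps_subdiff (\<lambda>y. ereal (\<epsilon> / (2 * real_of_ereal (f x) - 2 * real_of_ereal (F t x) + \<epsilon>)) * F t y) \<epsilon> x))))"
      by (rule S.sub_sum) (use ep phi S.rho_props in auto)
  next
    fix \<phi> assume mem: "\<phi> \<in> (\<Inter>\<epsilon>\<in>{0<..}. wstar_cco (msum (\<Union>t\<in>{t \<in> T. F t x = f x}. eps_subdiff (F t) \<epsilon> x)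
             (if {t \<in> T. F t x = f x} = T then {(\<lambda>_. 0)}
              else (\<Union>t\<in>T - {t \<in> T. F t x = f x}. smul_set {0, \<epsilon>}
                      (eps_subdiff (\<lambda>y. ereal (\<epsilon> / (2 * real_of_ereal (f x) - 2 * real_of_ereal (F t x) + \<epsilon>)) * F t y) \<epsilon> x)))))"
    show "\<phi> \<in> eps_subdiff f 0 x"
      by (rule S.sup_sum[where rh = "\<lambda>\<epsilon> t. \<epsilon> / (2 * real_of_ereal (f x) - 2 * real_of_ereal (F t x) + \<epsilon>)"])
        (use S.rho_props mem in auto)
  next
    fix \<phi> and \<epsilon> :: real assume phi: "\<phi> \<in> eps_subdiff f 0 x" and ep: "\<epsilon> \<in> {0<..}"
    show "\<phi> \<in> wstar_cco ((\<Union>t\<in>{t \<in> T. F t x = f x}. eps_subdiff (F t) \<epsilon> x) \<union>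
             (\<Union>t\<in>T - {t \<in> T. F t x = f x}. smul_set {\<epsilon>}
                      (eps_subdiff (\<lambda>y. ereal (\<epsilon> / (2 * real_of_ereal (f x) - 2 * real_of_ereal (F t x) + \<epsilon>)) * F t y) \<epsilon> x)))"
      by (rule S.sub_union) (use ep phi S.rho_props in auto)
  next
    fix \<phi> assume mn: "\<forall>y. f x \<le> f y" and mem: "\<phi> \<in> (\<Inter>\<epsilon>\<in>{0<..}. wstar_cco ((\<Union>t\<in>{t \<in> T. F t x = f x}. eps_subdiff (F t) \<epsilon> x) \<union>
             (\<Union>t\<in>T - {t \<in> T. F t x = f x}. smul_set {\<epsilon>}
                      (eps_subdiff (\<lambda>y. ereal (\<epsilon> / (2 * real_of_ereal (f x) - 2 * real_of_ereal (F t x) + \<epsilon>)) * F t y) \<epsilon> x))))"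
    show "\<phi> \<in> eps_subdiff f 0 x"
      by (rule S.sup_union[where rh = "\<lambda>\<epsilon> t. \<epsilon> / (2 * real_of_ereal (f x) - 2 * real_of_ereal (F t x) + \<epsilon>)"])
        (use S.rho_props mem mn in auto)
  qed
qed


end
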